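(* Let $\Gamma$ be an infinite connected subgraph of $\mathbb B$ with natural weights, $x_0\in\Gamma$, $r\ge1$, $B=B(x_0,r)$ and $M=M(x_0,r)$. Then (a) $E^z\tau_B\le2rV(x_0,r)$ for all $z\in B(x_0,r)$; (b) $E^x\tau_B\ge\dfrac{rV(x_0,r/(32M))}{32M}$ for all $x\in B(x_0,r/(32M))$.
   Context: $\mathbb B$ is the rooted tree in which every vertex has $n_0\ge2$ children. On $\Gamma$: $\mu_{xy}=1$ for adjacent $x,y$ and $0$ otherwise, $\mu_x$ is the degree of $x$ in $\Gamma$, $\mu(A)=\sum_{x\in A}\mu_x$, $d$ the graph distance in $\Gamma$, $B(x,r)=\{y\in\Gamma:d(x,y)\le r\}$, $V(x,r)=\mu(B(x,r))$. $Y$ is the continuous-time simple random walk on $\Gamma$ (exponential mean-1 holding times, jumps to a uniform neighbour), $P^x,E^x$ its law and expectation started at $x$, and $\tau_B=\inf\{t\ge0:Y_t\notin B\}$. $M(x,r)$ is the smallest $m$ such that there is $A=\{z_1,\dots,z_m\}\subset\Gamma$ with $d(x,z_i)\in[r/4,3r/4]$ for all $i$ such that every path in $\Gamma$ from $x$ to $\Gamma\setminus B(x,r)$ passes through $A$. *)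

theory Defs
  imports "HOL-Probability.Probability"
begin

text \<open>The rooted tree B in which every vertex has n0 children: vertices are the finite
  lists of natural numbers with all entries < n0 (the root is the empty list, the children
  of v are v @ [i] for i < n0).  A subgraph Gamma is given by its vertex set G; since a
  connected subgraph of a tree is the induced subgraph on its vertex set, the edges of
  Gamma are the tree edges between vertices of G.\<close>

definition tree_vertex :: "nat \<Rightarrow> nat list \<Rightarrow> bool" where
  "tree_vertex n0 v \<longleftrightarrow> (\<forall>i\<in>set v. i < n0)"

definition tadj :: "nat list \<Rightarrow> nat list \<Rightarrow> bool" where
  "tadj v w \<longleftrightarrow> (\<exists>i. w = v @ [i]) \<or> (\<exists>i. v = w @ [i])"

definition gwalk :: "nat list set \<Rightarrow> nat list list \<Rightarrow> bool" where
  "gwalk G p \<longleftrightarrow> p \<noteq> [] \<and> set p \<subseteq> G \<and> (\<forall>i. Suc i < length p \<longrightarrow> tadj (p ! i) (p ! Suc i))"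

definition connected_sub :: "nat list set \<Rightarrow> bool" where
  "connected_sub G \<longleftrightarrow> (\<forall>x\<in>G. \<forall>y\<in>G. \<exists>p. gwalk G p \<and> hd p = x \<and> last p = y)"

definition gdist :: "nat list set \<Rightarrow> nat list \<Rightarrow> nat list \<Rightarrow> nat" where
  "gdist G x y = (LEAST n. \<exists>p. gwalk G p \<and> hd p = x \<and> last p = y \<and> length p = Suc n)"

definition gdeg :: "nat list set \<Rightarrow> nat list \<Rightarrow> nat" where
  "gdeg G x = card {y\<in>G. tadj x y}"

definition gball :: "nat list set \<Rightarrow> nat list \<Rightarrow> real \<Rightarrow> nat list set" where
  "gball G x r = {y\<in>G. real (gdist G x y) \<le> r}"

definition gvol :: "nat list set \<Rightarrow> nat list \<Rightarrow> real \<Rightarrow> real" where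
  "gvol G x r = (\<Sum>y\<in>gball G x r. real (gdeg G y))"

text \<open>M(x,r), valued in extended naturals (infinite if no separating set exists).\<close>
definition Msep :: "nat list set \<Rightarrow> nat list \<Rightarrow> real \<Rightarrow> enat" where
  "Msep G x r = Inf {enat (card A) | A. finite A \<and> A \<subseteq> G \<and>
      (\<forall>z\<in>A. r / 4 \<le> real (gdist G x z) \<and> real (gdist G x z) \<le> 3 * r / 4) \<and>
      (\<forall>p. gwalk G p \<and> hd p = x \<and> last p \<notin> gball G x r \<longrightarrow> set p \<inter> A \<noteq> {})}"

definition nbr_list :: "nat \<Rightarrow> nat list set \<Rightarrow> nat list \<Rightarrow> nat list list" where
  "nbr_list n0 G v = (if v \<noteq> [] \<and> butlast v \<in> G then [butlast v] else [])
      @ filter (\<lambda>w. w \<in> G) (map (\<lambda>i. v @ [i]) [0..<n0])"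

definition jump :: "nat \<Rightarrow> nat list set \<Rightarrow> nat list \<Rightarrow> real \<Rightarrow> nat list" where
  "jump n0 G v u = (let l = nbr_list n0 G v in
     if l = [] then v else l ! min (length l - 1) (nat \<lfloor>u * real (length l)\<rfloor>))"

text \<open>Driving randomness: i.i.d. pairs (U_n, H_n), U_n uniform on [0,1], H_n exponential
  of mean 1.  The jump chain is X_0 = z, X_(n+1) = jump(X_n, U_n); the continuous-time walk
  is Y_t = X_n for S_n \<le> t < S_(n+1), S_n = H_0 + ... + H_(n-1).\<close>
definition walk_space :: "(nat \<Rightarrow> real \<times> real) measure" where
  "walk_space = PiM UNIV (\<lambda>_. uniform_measure lborel {0..1} \<Otimes>\<^sub>M density lborel (exponential_density 1))"

fun jchain :: "nat \<Rightarrow> nat list set \<Rightarrow> nat list \<Rightarrow> (nat \<Rightarrow> real \<times> real) \<Rightarrow> nat \<Rightarrow> nat list" where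
  "jchain n0 G z \<omega> 0 = z"
| "jchain n0 G z \<omega> (Suc n) = jump n0 G (jchain n0 G z \<omega> n) (fst (\<omega> n))"

text \<open>Exit time tau_B = inf{t. Y_t \<notin> B} = S_N, N the first index with X_N \<notin> B.\<close>
definition exit_time :: "nat \<Rightarrow> nat list set \<Rightarrow> nat list set \<Rightarrow> nat list \<Rightarrow> (nat \<Rightarrow> real \<times> real) \<Rightarrow> ennreal" where
  "exit_time n0 G B z \<omega> = (if \<exists>n. jchain n0 G z \<omega> n \<notin> B
     then (\<Sum>k < (LEAST n. jchain n0 G z \<omega> n \<notin> B). ennreal (snd (\<omega> k)))
     else \<infinity>)"

definition exp_exit :: "nat \<Rightarrow> nat list set \<Rightarrow> nat list set \<Rightarrow> nat list \<Rightarrow> ennreal" where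
  "exp_exit n0 G B z = (\<integral>\<^sup>+ \<omega>. exit_time n0 G B z \<omega> \<partial>walk_space)"

end

theory Submission
  imports Defs
begin


definition Qm :: "(real \<times> real) measure" where
  "Qm = uniform_measure lborel {0..1} \<Otimes>\<^sub>M density lborel (exponential_density 1)"

lemma prob_U: "prob_space (uniform_measure lborel {0..1::real})"
  by (rule prob_space_uniform_measure) auto

lemma prob_Qm: "prob_space Qm"
proof -
  interpret U: prob_space "uniform_measure lborel {0..1::real}" by (rule prob_U)
  interpret E: prob_space "density lborel (exponential_density 1)"
    by (rule prob_space_exponential_density) simp
  interpret pair_prob_space "uniform_measure lborel {0..1::real}" "density lborel (exponential_density 1)" ..
  show ?thesis unfolding Qm_def by (rule P.prob_space_axioms)
qed

lemma walk_space_Qm: "walk_space = PiM UNIV (\<lambda>_. Qm)"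
  unfolding walk_space_def Qm_def ..

lemma walk_decomp:
  assumes f[measurable]: "f \<in> borel_measurable walk_space"
  shows "(\<integral>\<^sup>+\<omega>. f \<omega> \<partial>walk_space) = (\<integral>\<^sup>+x. (\<integral>\<^sup>+\<omega>. f (case_nat x \<omega>) \<partial>walk_space) \<partial>Qm)"
proof -
  interpret Q: prob_space Qm by (rule prob_Qm)
  interpret S: sequence_space Qm ..
  interpret P: pair_sigma_finite Qm "\<Pi>\<^sub>M i::nat\<in>UNIV. Qm" ..
  have f': "f \<in> borel_measurable S.S" using f by (simp add: walk_space_Qm)
  have "(\<integral>\<^sup>+\<omega>. f \<omega> \<partial>walk_space) = (\<integral>\<^sup>+X. f X \<partial>S.S)" by (simp add: walk_space_Qm)
  also have "\<dots> = (\<integral>\<^sup>+X. f ((\<lambda>(s, \<omega>). case_nat s \<omega>) X) \<partial>(Qm \<Otimes>\<^sub>M S.S))"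
    by (subst S.PiM_iter[symmetric]) (simp add: nn_integral_distr f')
  also have "\<dots> = (\<integral>\<^sup>+x. \<integral>\<^sup>+X. f ((\<lambda>(s, \<omega>). case_nat s \<omega>) (x, X)) \<partial>S.S \<partial>Qm)"
    using f' by (subst S.nn_integral_fst) simp_all
  finally show ?thesis by (simp add: walk_space_Qm)
qed

lemma jump_meas[measurable]: "jump n0 G v \<in> measurable borel (count_space UNIV)"
  unfolding jump_def Let_def by measurable

lemma jchain_meas[measurable]: "(\<lambda>\<omega>. jchain n0 G z \<omega> n) \<in> measurable walk_space (count_space UNIV)"
proof (induction n)
  case 0 then show ?case by simp
next
  case (Suc n)
  have jm: "(\<lambda>\<omega>. jump n0 G v (fst (\<omega> n))) \<in> measurable walk_space (count_space UNIV)" for v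
    unfolding walk_space_def by measurable
  then have "(\<lambda>\<omega>. jump n0 G (jchain n0 G z \<omega> n) (fst (\<omega> n))) \<in> measurable walk_space (count_space UNIV)"
    using measurable_compose_countable[where f="\<lambda>v \<omega>. jump n0 G v (fst (\<omega> n))" and g="\<lambda>\<omega>. jchain n0 G z \<omega> n", OF jm Suc.IH] by simp
  then show ?case by simp
qed

lemma comp_meas[measurable]: "(\<lambda>\<omega>. \<omega> j) \<in> measurable walk_space Qm"
  unfolding walk_space_Qm by measurable

lemma Qm_sets: "sets Qm = sets (borel \<Otimes>\<^sub>M borel)"
  unfolding Qm_def by (intro sets_pair_measure_cong) auto

lemma snd_meas_Qm[measurable]: "(\<lambda>x. snd x) \<in> borel_measurable Qm"
  by (simp add: measurable_cong_sets[OF Qm_sets refl])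

lemma fst_meas_Qm[measurable]: "(\<lambda>x. fst x) \<in> borel_measurable Qm"
  by (simp add: measurable_cong_sets[OF Qm_sets refl])

definition Tk :: "nat \<Rightarrow> nat list set \<Rightarrow> nat list set \<Rightarrow> nat \<Rightarrow> nat list \<Rightarrow> (nat \<Rightarrow> real \<times> real) \<Rightarrow> ennreal" where
  "Tk n0 G B k z \<omega> = (\<Sum>j<k. if (\<forall>i\<le>j. jchain n0 G z \<omega> i \<in> B) then ennreal (snd (\<omega> j)) else 0)"

definition Ik :: "nat \<Rightarrow> nat list set \<Rightarrow> nat list set \<Rightarrow> nat \<Rightarrow> nat list \<Rightarrow> (nat \<Rightarrow> real \<times> real) \<Rightarrow> ennreal" where
  "Ik n0 G B k z \<omega> = (if (\<forall>i<k. jchain n0 G z \<omega> i \<in> B) then 1 else 0)"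

lemma jchain_shift:
  "jchain n0 G z \<omega> (Suc n) = jchain n0 G (jump n0 G z (fst (\<omega> 0))) (\<lambda>n. \<omega> (Suc n)) n"
  by (induction n) auto

lemma all_le_Suc_iff: "(\<forall>i\<le>Suc j. P i) \<longleftrightarrow> P 0 \<and> (\<forall>i\<le>j. P (Suc i))"
  by (metis Suc_le_mono le0 not0_implies_Suc)

lemma all_less_Suc_iff: "(\<forall>i<Suc j. P i) \<longleftrightarrow> P 0 \<and> (\<forall>i<j. P (Suc i))"
  by (metis Suc_less_eq not0_implies_Suc zero_less_Suc)

lemma Tk_Suc: "Tk n0 G B (Suc k) z \<omega> = (if z \<in> B then ennreal (snd (\<omega> 0)) +
     Tk n0 G B k (jump n0 G z (fst (\<omega> 0))) (\<lambda>n. \<omega> (Suc n)) else 0)"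
  unfolding Tk_def sum.lessThan_Suc_shift all_le_Suc_iff jchain_shift[symmetric]
  by auto

lemma Ik_Suc: "Ik n0 G B (Suc k) z \<omega> = (if z \<in> B then
     Ik n0 G B k (jump n0 G z (fst (\<omega> 0))) (\<lambda>n. \<omega> (Suc n)) else 0)"
  unfolding Ik_def all_less_Suc_iff jchain_shift[symmetric]
  by auto

lemma Tk_meas[measurable]: "Tk n0 G B k z \<in> borel_measurable walk_space"
  unfolding Tk_def[abs_def] by measurable

lemma Ik_meas[measurable]: "Ik n0 G B k z \<in> borel_measurable walk_space"
  unfolding Ik_def[abs_def] by measurable

lemma exp_mean: "(\<integral>\<^sup>+y. ennreal y \<partial>density lborel (exponential_density 1)) = 1"
proof -
  have "(\<integral>\<^sup>+y. ennreal y \<partial>density lborel (exponential_density 1)) =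
     (\<integral>\<^sup>+y. ennreal (exponential_density 1 y) * ennreal y \<partial>lborel)"
    by (subst nn_integral_density) auto
  also have "\<dots> = (\<integral>\<^sup>+x. ennreal (x^1 * exp (-x)) * indicator {0 ..} x \<partial>lborel)"
    by (intro nn_integral_cong) (auto simp: exponential_density_def indicator_def ennreal_mult'[symmetric] mult.commute)
  also have "\<dots> = 1" by (subst nn_intergal_power_times_exp_Ici) simp
  finally show ?thesis .
qed

lemma Qm_fst:
  assumes [measurable]: "g \<in> borel_measurable borel"
  shows "(\<integral>\<^sup>+x. g (fst x) \<partial>Qm) = (\<integral>\<^sup>+u. g u \<partial>uniform_measure lborel {0..1})"
proof -
  interpret U: prob_space "uniform_measure lborel {0..1::real}" by (rule prob_U)
  interpret E: prob_space "density lborel (exponential_density 1)"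
    by (rule prob_space_exponential_density) simp
  interpret pair_prob_space "uniform_measure lborel {0..1::real}" "density lborel (exponential_density 1)" ..
  have "(\<integral>\<^sup>+x. g (fst x) \<partial>Qm) = (\<integral>\<^sup>+u. \<integral>\<^sup>+t. g (fst (u,t)) \<partial>density lborel (exponential_density 1) \<partial>uniform_measure lborel {0..1})"
    unfolding Qm_def by (rule E.nn_integral_fst[symmetric]) (auto simp: measurable_cong_sets[OF Qm_sets[unfolded Qm_def] refl])
  also have "\<dots> = (\<integral>\<^sup>+u. g u \<partial>uniform_measure lborel {0..1})"
    using E.emeasure_space_1 by simp
  finally show ?thesis .
qed

lemma Qm_snd: "(\<integral>\<^sup>+x. ennreal (snd x) \<partial>Qm) = 1"
proof -
  interpret U: prob_space "uniform_measure lborel {0..1::real}" by (rule prob_U)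
  interpret E: prob_space "density lborel (exponential_density 1)"
    by (rule prob_space_exponential_density) simp
  interpret pair_prob_space "uniform_measure lborel {0..1::real}" "density lborel (exponential_density 1)" ..
  have m: "(\<lambda>x. ennreal (snd x)) \<in> borel_measurable (uniform_measure lborel {0..1::real} \<Otimes>\<^sub>M density lborel (exponential_density 1))"
    by (simp add: measurable_cong_sets[OF Qm_sets[unfolded Qm_def] refl])
  have "(\<integral>\<^sup>+u. \<integral>\<^sup>+t. (\<lambda>x. ennreal (snd x)) (u,t) \<partial>density lborel (exponential_density 1) \<partial>uniform_measure lborel {0..1::real}) = (\<integral>\<^sup>+x. ennreal (snd x) \<partial>Qm)"
    unfolding Qm_def by (rule E.nn_integral_fst[OF m])
  then have "(\<integral>\<^sup>+x. ennreal (snd x) \<partial>Qm) = (\<integral>\<^sup>+u. \<integral>\<^sup>+t. ennreal t \<partial>density lborel (exponential_density 1) \<partial>uniform_measure lborel {0..1::real})"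
    by simp
  also have "\<dots> = 1"
    using exp_mean U.emeasure_space_1 by simp
  finally show ?thesis .
qed

lemma floor_index:
  fixes u :: real and n :: nat
  assumes "0 \<le> u" "u < 1" "0 < n" "i < n"
  shows "(real i / n \<le> u \<and> u < (real i + 1) / n) \<longleftrightarrow> i = nat \<lfloor>u * n\<rfloor>"
proof -
  have "(real i / n \<le> u \<and> u < (real i + 1) / n) \<longleftrightarrow> (real i \<le> u * n \<and> u * n < real i + 1)"
    using assms by (simp add: field_simps)
  also have "\<dots> \<longleftrightarrow> \<lfloor>u * n\<rfloor> = int i"
    by (simp add: floor_eq_iff)
  also have "\<dots> \<longleftrightarrow> i = nat \<lfloor>u * n\<rfloor>"
    using assms by auto
  finally show ?thesis .
qed

lemma jump_integral:
  assumes l: "nbr_list n0 G z \<noteq> []"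
  shows "(\<integral>\<^sup>+u. h (jump n0 G z u) \<partial>uniform_measure lborel {0..1::real}) =
     (\<Sum>i<length (nbr_list n0 G z). h (nbr_list n0 G z ! i)) * ennreal (1 / real (length (nbr_list n0 G z)))"
proof -
  define l where "l = nbr_list n0 G z"
  define n where "n = length l"
  have n: "0 < n" using l unfolding n_def l_def by simp
  have hm: "(\<lambda>u. h (jump n0 G z u)) \<in> borel_measurable borel"
    using jump_meas[of n0 G z] by (rule measurable_compose) simp
  have "(\<integral>\<^sup>+u. h (jump n0 G z u) \<partial>uniform_measure lborel {0..1::real}) =
      (\<integral>\<^sup>+u. h (jump n0 G z u) * indicator {0..1} u \<partial>lborel) / emeasure lborel {0..1::real}"
    by (rule nn_integral_uniform_measure) (use hm in auto)
  also have "\<dots> = (\<integral>\<^sup>+u. h (jump n0 G z u) * indicator {0..1} u \<partial>lborel)" by (simp add: divide_ennreal_def)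
  also have "\<dots> = (\<integral>\<^sup>+u. (\<Sum>i<n. h (l ! i) * indicator {real i / n ..< (real i + 1) / n} u) \<partial>lborel)"
  proof (rule nn_integral_cong_AE)
    show "AE u in lborel. h (jump n0 G z u) * indicator {0..1} u = (\<Sum>i<n. h (l ! i) * indicator {real i / n ..< (real i + 1) / n} u)"
      using AE_lborel_singleton[of "1::real"]
    proof eventually_elim
      case (elim u)
      show ?case
      proof (cases "0 \<le> u \<and> u < 1")
        case True
        define k where "k = nat \<lfloor>u * n\<rfloor>"
        have k: "k < n"
        proof -
          have "u * n < n" using True n by simp
          then have "\<lfloor>u * n\<rfloor> < int n" by (simp add: floor_less_iff)
          then show ?thesis unfolding k_def using nat_less_iff[of "\<lfloor>u * real n\<rfloor>" n] True by simp
        qed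
        have mk: "min (n - 1) k = k" using k by simp
        have "(\<Sum>i<n. h (l ! i) * indicator {real i / n ..< (real i + 1) / n} u) = (\<Sum>i<n. if i = k then h (l ! i) else 0)"
          by (intro sum.cong refl) (use floor_index[OF _ _ n, of u] True in \<open>auto simp: indicator_def k_def\<close>)
        also have "\<dots> = h (l ! k)" using k by simp
        also have "h (l ! k) = h (jump n0 G z u) * indicator {0..1} u"
          using True mk l unfolding jump_def Let_def k_def l_def n_def by (simp add: indicator_def)
        finally show ?thesis by simp
      next
        case False
        have "indicator {real i / n ..< (real i + 1) / n} u = (0::ennreal)" if "i < n" for i
        proof -
          have "(real i + 1) / n \<le> 1" using that n by (simp add: field_simps)
          moreover have "0 \<le> real i / n" by simp
          ultimately show ?thesis using False elim by (auto simp: indicator_def, linarith+)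
        qed
        moreover have "indicator {0..1} u = (0::ennreal)" using False elim by (auto simp: indicator_def)
        ultimately show ?thesis by simp
      qed
    qed
  qed
  also have "\<dots> = (\<Sum>i<n. \<integral>\<^sup>+u. h (l ! i) * indicator {real i / n ..< (real i + 1) / n} u \<partial>lborel)"
    by (rule nn_integral_sum) simp
  also have "\<dots> = (\<Sum>i<n. h (l ! i) * ennreal (1 / n))"
  proof (intro sum.cong refl)
    fix i assume "i \<in> {..<n}"
    have "(real i + 1) / n - real i / n = 1 / n" by (simp add: add_divide_distrib)
    moreover have "real i / n \<le> (real i + 1) / n" using n by (simp add: divide_right_mono)
    ultimately show "(\<integral>\<^sup>+u. h (l ! i) * indicator {real i / n ..< (real i + 1) / n} u \<partial>lborel) = h (l ! i) * ennreal (1 / n)"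
      by (subst nn_integral_cmult_indicator) auto
  qed
  also have "\<dots> = (\<Sum>i<n. h (l ! i)) * ennreal (1 / n)"
    by (simp add: sum_distrib_right)
  finally show ?thesis unfolding l_def n_def .
qed

lemma prob_walk: "prob_space walk_space"
proof -
  interpret Q: prob_space Qm by (rule prob_Qm)
  interpret S: sequence_space Qm ..
  show ?thesis unfolding walk_space_Qm by (rule S.P.prob_space_axioms)
qed

definition ET where "ET n0 G B k z = (\<integral>\<^sup>+\<omega>. Tk n0 G B k z \<omega> \<partial>walk_space)"
definition EI where "EI n0 G B k z = (\<integral>\<^sup>+\<omega>. Ik n0 G B k z \<omega> \<partial>walk_space)"

lemma case_nat_shift: "(\<lambda>n. case_nat x \<omega> (Suc n)) = \<omega>" by simp

lemma ET_0: "ET n0 G B 0 z = 0" unfolding ET_def Tk_def by simp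

lemma EI_0: "EI n0 G B 0 z = 1"
proof -
  interpret W: prob_space walk_space by (rule prob_walk)
  show ?thesis unfolding EI_def Ik_def using W.emeasure_space_1 by simp
qed

lemma ET_out: "z \<notin> B \<Longrightarrow> ET n0 G B (Suc k) z = 0" unfolding ET_def Tk_Suc by simp
lemma EI_out: "z \<notin> B \<Longrightarrow> EI n0 G B (Suc k) z = 0" unfolding EI_def Ik_Suc by simp

lemma ET_Suc:
  assumes "z \<in> B" and l: "nbr_list n0 G z \<noteq> []"
  shows "ET n0 G B (Suc k) z = 1 + (\<Sum>i<length (nbr_list n0 G z). ET n0 G B k (nbr_list n0 G z ! i)) * ennreal (1 / real (length (nbr_list n0 G z)))"
proof -
  interpret W: prob_space walk_space by (rule prob_walk)
  have gm: "(\<lambda>u. ET n0 G B k (jump n0 G z u)) \<in> borel_measurable borel"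
    using jump_meas[of n0 G z] by (rule measurable_compose) simp
  have "ET n0 G B (Suc k) z = (\<integral>\<^sup>+x. (\<integral>\<^sup>+\<omega>. Tk n0 G B (Suc k) z (case_nat x \<omega>) \<partial>walk_space) \<partial>Qm)"
    unfolding ET_def by (rule walk_decomp) simp
  also have "\<dots> = (\<integral>\<^sup>+x. (\<integral>\<^sup>+\<omega>. ennreal (snd x) + Tk n0 G B k (jump n0 G z (fst x)) \<omega> \<partial>walk_space) \<partial>Qm)"
    using assms(1) by (simp add: Tk_Suc case_nat_shift)
  also have "\<dots> = (\<integral>\<^sup>+x. ennreal (snd x) + ET n0 G B k (jump n0 G z (fst x)) \<partial>Qm)"
    by (intro nn_integral_cong) (simp add: nn_integral_add W.emeasure_space_1 ET_def)
  also have "\<dots> = (\<integral>\<^sup>+x. ennreal (snd x) \<partial>Qm) + (\<integral>\<^sup>+x. ET n0 G B k (jump n0 G z (fst x)) \<partial>Qm)"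
    by (rule nn_integral_add) (use gm in auto)
  also have "\<dots> = 1 + (\<integral>\<^sup>+u. ET n0 G B k (jump n0 G z u) \<partial>uniform_measure lborel {0..1})"
    by (simp add: Qm_snd Qm_fst[OF gm])
  also have "\<dots> = 1 + (\<Sum>i<length (nbr_list n0 G z). ET n0 G B k (nbr_list n0 G z ! i)) * ennreal (1 / real (length (nbr_list n0 G z)))"
    by (simp add: jump_integral[OF l])
  finally show ?thesis .
qed

lemma EI_Suc:
  assumes "z \<in> B" and l: "nbr_list n0 G z \<noteq> []"
  shows "EI n0 G B (Suc k) z = (\<Sum>i<length (nbr_list n0 G z). EI n0 G B k (nbr_list n0 G z ! i)) * ennreal (1 / real (length (nbr_list n0 G z)))"
proof -
  interpret W: prob_space walk_space by (rule prob_walk)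
  have gm: "(\<lambda>u. EI n0 G B k (jump n0 G z u)) \<in> borel_measurable borel"
    using jump_meas[of n0 G z] by (rule measurable_compose) simp
  have "EI n0 G B (Suc k) z = (\<integral>\<^sup>+x. (\<integral>\<^sup>+\<omega>. Ik n0 G B (Suc k) z (case_nat x \<omega>) \<partial>walk_space) \<partial>Qm)"
    unfolding EI_def by (rule walk_decomp) simp
  also have "\<dots> = (\<integral>\<^sup>+x. (\<integral>\<^sup>+\<omega>. Ik n0 G B k (jump n0 G z (fst x)) \<omega> \<partial>walk_space) \<partial>Qm)"
    using assms(1) by (simp add: Ik_Suc case_nat_shift)
  also have "\<dots> = (\<integral>\<^sup>+u. EI n0 G B k (jump n0 G z u) \<partial>uniform_measure lborel {0..1})"
    unfolding EI_def[symmetric] by (rule Qm_fst[OF gm])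
  also have "\<dots> = (\<Sum>i<length (nbr_list n0 G z). EI n0 G B k (nbr_list n0 G z ! i)) * ennreal (1 / real (length (nbr_list n0 G z)))"
    by (simp add: jump_integral[OF l])
  finally show ?thesis .
qed

lemma Tk_le_exit: "Tk n0 G B k z \<omega> \<le> exit_time n0 G B z \<omega>"
proof (cases "\<exists>n. jchain n0 G z \<omega> n \<notin> B")
  case True
  define N where "N = (LEAST n. jchain n0 G z \<omega> n \<notin> B)"
  have NB: "jchain n0 G z \<omega> N \<notin> B" unfolding N_def using True by (rule LeastI_ex)
  have "Tk n0 G B k z \<omega> = (\<Sum>j<k. if (\<forall>i\<le>j. jchain n0 G z \<omega> i \<in> B) then ennreal (snd (\<omega> j)) else 0)"
    by (simp add: Tk_def)
  also have "\<dots> \<le> (\<Sum>j<k. if j < N then ennreal (snd (\<omega> j)) else 0)"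
    by (intro sum_mono) (use NB in \<open>auto simp: not_less\<close>)
  also have "\<dots> = (\<Sum>j\<in>{..<k} \<inter> {..<N}. ennreal (snd (\<omega> j)))"
    by (subst sum.inter_restrict) (auto intro!: sum.cong simp: lessThan_def)
  also have "\<dots> \<le> (\<Sum>j<N. ennreal (snd (\<omega> j)))"
    by (intro sum_mono2) auto
  also have "\<dots> = exit_time n0 G B z \<omega>"
    using True by (simp add: exit_time_def N_def)
  finally show ?thesis .
next
  case False
  then show ?thesis by (simp add: exit_time_def)
qed

lemma exit_le_Tk:
  assumes "\<exists>n. jchain n0 G z \<omega> n \<notin> B"
  shows "\<exists>k. exit_time n0 G B z \<omega> \<le> Tk n0 G B k z \<omega>"
proof -
  define N where "N = (LEAST n. jchain n0 G z \<omega> n \<notin> B)"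
  have "\<forall>i<N. jchain n0 G z \<omega> i \<in> B" unfolding N_def using not_less_Least by blast
  then have "Tk n0 G B N z \<omega> = (\<Sum>j<N. ennreal (snd (\<omega> j)))"
    unfolding Tk_def by (intro sum.cong refl) auto
  then show ?thesis using assms by (intro exI[of _ N]) (simp add: exit_time_def N_def)
qed

lemma Tk_mono: "k \<le> k' \<Longrightarrow> Tk n0 G B k z \<omega> \<le> Tk n0 G B k' z \<omega>"
  unfolding Tk_def by (intro sum_mono2) auto

lemma exit_bad:
  "exit_time n0 G B z \<omega> \<le> (SUP k. Tk n0 G B k z \<omega>) + \<infinity> * indicator {\<omega>. \<forall>n. jchain n0 G z \<omega> n \<in> B} \<omega>"
proof (cases "\<exists>n. jchain n0 G z \<omega> n \<notin> B")
  case True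
  then obtain k where "exit_time n0 G B z \<omega> \<le> Tk n0 G B k z \<omega>" using exit_le_Tk by blast
  also have "\<dots> \<le> (SUP k. Tk n0 G B k z \<omega>)" by (rule SUP_upper) simp
  finally show ?thesis by (simp add: add_increasing2)
next
  case False
  then show ?thesis by (simp add: indicator_def)
qed

lemma exp_exit_ge: "ET n0 G B k z \<le> exp_exit n0 G B z"
  unfolding ET_def exp_exit_def by (intro nn_integral_mono Tk_le_exit)

lemma bad_meas[measurable]: "{\<omega>\<in>space walk_space. \<forall>n. jchain n0 G z \<omega> n \<in> B} \<in> sets walk_space"
  by measurable

lemma bad_le_EI: "emeasure walk_space {\<omega>\<in>space walk_space. \<forall>n. jchain n0 G z \<omega> n \<in> B} \<le> EI n0 G B k z"
proof -
  have "emeasure walk_space {\<omega>\<in>space walk_space. \<forall>n. jchain n0 G z \<omega> n \<in> B} =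
     (\<integral>\<^sup>+\<omega>. indicator {\<omega>\<in>space walk_space. \<forall>n. jchain n0 G z \<omega> n \<in> B} \<omega> \<partial>walk_space)"
    by simp
  also have "\<dots> \<le> EI n0 G B k z"
    unfolding EI_def by (intro nn_integral_mono) (auto simp: indicator_def Ik_def)
  finally show ?thesis .
qed

lemma exp_exit_le:
  assumes "emeasure walk_space {\<omega>\<in>space walk_space. \<forall>n. jchain n0 G z \<omega> n \<in> B} = 0"
  shows "exp_exit n0 G B z \<le> (SUP k. ET n0 G B k z)"
proof -
  let ?Bad = "{\<omega>\<in>space walk_space. \<forall>n. jchain n0 G z \<omega> n \<in> B}"
  have "exp_exit n0 G B z \<le> (\<integral>\<^sup>+\<omega>. (SUP k. Tk n0 G B k z \<omega>) + \<infinity> * indicator ?Bad \<omega> \<partial>walk_space)"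
    unfolding exp_exit_def
  proof (intro nn_integral_mono)
    fix \<omega> assume "\<omega> \<in> space walk_space"
    then show "exit_time n0 G B z \<omega> \<le> (SUP k. Tk n0 G B k z \<omega>) + \<infinity> * indicator ?Bad \<omega>"
      using exit_bad[of n0 G B z \<omega>] by (simp add: indicator_def)
  qed
  also have "\<dots> = (\<integral>\<^sup>+\<omega>. (SUP k. Tk n0 G B k z \<omega>) \<partial>walk_space) + (\<integral>\<^sup>+\<omega>. \<infinity> * indicator ?Bad \<omega> \<partial>walk_space)"
    by (rule nn_integral_add) auto
  also have "(\<integral>\<^sup>+\<omega>. \<infinity> * indicator ?Bad \<omega> \<partial>walk_space) = 0"
    using assms by (subst nn_integral_cmult) auto
  also have "(\<integral>\<^sup>+\<omega>. (SUP k. Tk n0 G B k z \<omega>) \<partial>walk_space) = (SUP k. ET n0 G B k z)"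
    unfolding ET_def
    by (rule nn_integral_monotone_convergence_SUP) (auto simp: incseq_def le_fun_def Tk_mono)
  finally show ?thesis by simp
qed


definition avgl :: "nat \<Rightarrow> nat list set \<Rightarrow> (nat list \<Rightarrow> real) \<Rightarrow> nat list \<Rightarrow> real" where
  "avgl n0 G h z = (\<Sum>i<length (nbr_list n0 G z). h (nbr_list n0 G z ! i)) / real (length (nbr_list n0 G z))"

primrec er :: "nat \<Rightarrow> nat list set \<Rightarrow> nat list set \<Rightarrow> nat \<Rightarrow> nat list \<Rightarrow> real" where
  "er n0 G B 0 z = 0"
| "er n0 G B (Suc k) z = (if z \<in> B then 1 + avgl n0 G (er n0 G B k) z else 0)"

primrec qr :: "nat \<Rightarrow> nat list set \<Rightarrow> nat list set \<Rightarrow> nat \<Rightarrow> nat list \<Rightarrow> real" where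
  "qr n0 G B 0 z = 1"
| "qr n0 G B (Suc k) z = (if z \<in> B then avgl n0 G (qr n0 G B k) z else 0)"

lemma avgl_nonneg: "(\<And>w. 0 \<le> h w) \<Longrightarrow> 0 \<le> avgl n0 G h z"
  unfolding avgl_def by (intro divide_nonneg_nonneg sum_nonneg) auto

lemma er_nonneg: "0 \<le> er n0 G B k z"
  by (induction k arbitrary: z) (auto intro!: add_nonneg_nonneg avgl_nonneg)

lemma qr_nonneg: "0 \<le> qr n0 G B k z"
  by (induction k arbitrary: z) (auto intro!: avgl_nonneg)

lemma ennreal_div_aux: "0 \<le> a \<Longrightarrow> ennreal a * ennreal (1 / real n) = ennreal (a / real n)"
  by (simp add: ennreal_mult''[symmetric])

lemma ennreal_avgl:
  assumes "\<And>w. 0 \<le> h w"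
  shows "ennreal (\<Sum>i<length (nbr_list n0 G z). h (nbr_list n0 G z ! i)) * ennreal (1 / real (length (nbr_list n0 G z)))
     = ennreal (avgl n0 G h z)"
  unfolding avgl_def by (rule ennreal_div_aux) (simp add: assms sum_nonneg)

lemma ET_er:
  assumes nb: "\<forall>z\<in>B. nbr_list n0 G z \<noteq> []"
  shows "ET n0 G B k z = ennreal (er n0 G B k z)"
proof (induction k arbitrary: z)
  case 0 then show ?case by (simp add: ET_0)
next
  case (Suc k)
  show ?case
  proof (cases "z \<in> B")
    case True
    then show ?thesis using nb
      by (simp add: ET_Suc Suc.IH ennreal_avgl er_nonneg avgl_nonneg)
  qed (simp add: ET_out)
qed

lemma EI_qr:
  assumes nb: "\<forall>z\<in>B. nbr_list n0 G z \<noteq> []"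
  shows "EI n0 G B k z = ennreal (qr n0 G B k z)"
proof (induction k arbitrary: z)
  case 0 then show ?case by (simp add: EI_0)
next
  case (Suc k)
  show ?case
  proof (cases "z \<in> B")
    case True
    then show ?thesis using nb
      by (simp add: EI_Suc Suc.IH ennreal_avgl qr_nonneg)
  qed (simp add: EI_out)
qed


lemma avgl_add: "avgl n0 G (\<lambda>w. h1 w + h2 w) z = avgl n0 G h1 z + avgl n0 G h2 z"
  unfolding avgl_def by (simp add: sum.distrib add_divide_distrib)

lemma avgl_sum: "avgl n0 G (\<lambda>w. \<Sum>j<(k::nat). h j w) z = (\<Sum>j<k. avgl n0 G (h j) z)"
  unfolding avgl_def by (simp add: sum.swap[of _ "{..<k}"] sum_divide_distrib)

lemma avgl_const: "nbr_list n0 G z \<noteq> [] \<Longrightarrow> avgl n0 G (\<lambda>w. c) z = c"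
  unfolding avgl_def by simp

lemma avgl_cmult: "avgl n0 G (\<lambda>w. c * h w) z = c * avgl n0 G h z"
  unfolding avgl_def by (simp add: sum_distrib_left)

lemma avgl_mono: "(\<And>w. w \<in> set (nbr_list n0 G z) \<Longrightarrow> h1 w \<le> h2 w) \<Longrightarrow> avgl n0 G h1 z \<le> avgl n0 G h2 z"
  unfolding avgl_def by (intro divide_right_mono sum_mono) auto

lemma er_sum_qr:
  assumes nb: "\<forall>z\<in>B. nbr_list n0 G z \<noteq> []"
  shows "er n0 G B k z = (\<Sum>j<k. qr n0 G B (Suc j) z)"
proof (induction k arbitrary: z)
  case 0 then show ?case by simp
next
  case (Suc k)
  show ?case
  proof (cases "z \<in> B")
    case True
    have "er n0 G B (Suc k) z = 1 + avgl n0 G (\<lambda>w. \<Sum>j<k. qr n0 G B (Suc j) w) z"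
    proof -
      have e: "er n0 G B k = (\<lambda>w. \<Sum>j<k. qr n0 G B (Suc j) w)" using Suc.IH by (simp add: fun_eq_iff del: qr.simps)
      show ?thesis using True by (simp only: er.simps if_True e)
    qed
    also have "\<dots> = qr n0 G B 1 z + (\<Sum>j<k. qr n0 G B (Suc (Suc j)) z)"
    proof -
      have a: "qr n0 G B (Suc (Suc j)) z = avgl n0 G (qr n0 G B (Suc j)) z" for j
        using True by (simp only: qr.simps if_True)
      have b: "qr n0 G B 1 z = 1"
        using True nb avgl_const[of n0 G z 1] by (simp add: qr.simps(1)[abs_def])
      show ?thesis using True nb by (simp only: avgl_sum a b)
    qed
    also have "\<dots> = (\<Sum>j<Suc k. qr n0 G B (Suc j) z)"
      by (simp only: sum.lessThan_Suc_shift One_nat_def)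
    finally show ?thesis .
  qed simp
qed


declare qr.simps(2)[simp del] er.simps(2)[simp del]

lemma qr_tendsto:
  assumes nb: "\<forall>z\<in>B. nbr_list n0 G z \<noteq> []" and bd: "\<And>k. er n0 G B k x \<le> F"
  shows "(\<lambda>j. qr n0 G B (Suc j) x) \<longlonglongrightarrow> 0"
proof -
  have "summable (\<lambda>j. qr n0 G B (Suc j) x)"
    by (rule summableI_nonneg_bounded[where x=F]) (use bd er_sum_qr[OF nb] qr_nonneg in auto)
  then show ?thesis by (rule summable_LIMSEQ_zero)
qed

lemma bad_null:
  assumes nb: "\<forall>z\<in>B. nbr_list n0 G z \<noteq> []" and bd: "\<And>k. er n0 G B k x \<le> F"
  shows "emeasure walk_space {\<omega>\<in>space walk_space. \<forall>n. jchain n0 G x \<omega> n \<in> B} = 0"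
proof -
  interpret W: prob_space walk_space by (rule prob_walk)
  let ?Bad = "{\<omega>\<in>space walk_space. \<forall>n. jchain n0 G x \<omega> n \<in> B}"
  have le: "W.prob ?Bad \<le> qr n0 G B (Suc j) x" for j
  proof -
    have "emeasure walk_space ?Bad \<le> ennreal (qr n0 G B (Suc j) x)"
      using bad_le_EI[of n0 G x B "Suc j"] EI_qr[OF nb] by simp
    then show ?thesis by (simp add: W.emeasure_eq_measure qr_nonneg)
  qed
  have "W.prob ?Bad \<le> 0"
    by (rule LIMSEQ_le_const[OF qr_tendsto[OF nb bd]]) (use le in auto)
  then have "W.prob ?Bad = 0" by (simp add: antisym)
  then show ?thesis by (simp add: W.emeasure_eq_measure)
qed

theorem upper_main:
  assumes nb: "\<forall>z\<in>B. nbr_list n0 G z \<noteq> []" and bd: "\<And>k. er n0 G B k x \<le> F"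
  shows "exp_exit n0 G B x \<le> ennreal F"
proof -
  have "exp_exit n0 G B x \<le> (SUP k. ET n0 G B k x)"
    by (rule exp_exit_le[OF bad_null[OF nb bd]])
  also have "\<dots> \<le> ennreal F"
    by (rule SUP_least) (simp add: ET_er[OF nb] bd ennreal_leI)
  finally show ?thesis .
qed


lemma nbr_list_sub: "set (nbr_list n0 G z) \<subseteq> G"
  unfolding nbr_list_def by auto

lemma super_bound:
  assumes f0: "\<And>z. z \<in> G \<Longrightarrow> 0 \<le> f z"
    and sup: "\<And>z. z \<in> B \<Longrightarrow> 1 + avgl n0 G f z \<le> f z"
    and "z \<in> G"
  shows "er n0 G B k z \<le> f z"
  using assms(3)
proof (induction k arbitrary: z)
  case 0 then show ?case using f0 by simp
next
  case (Suc k)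
  show ?case
  proof (cases "z \<in> B")
    case True
    have "avgl n0 G (er n0 G B k) z \<le> avgl n0 G f z"
      by (rule avgl_mono) (use Suc.IH nbr_list_sub in blast)
    then show ?thesis using True sup[OF True] by (simp add: er.simps(2))
  qed (use f0 Suc.prems in \<open>simp add: er.simps(2)\<close>)
qed

lemma sub_bound:
  assumes nb: "\<forall>z\<in>B. nbr_list n0 G z \<noteq> []"
    and out: "\<And>z. z \<in> G \<Longrightarrow> z \<notin> B \<Longrightarrow> g z \<le> 0"
    and sub: "\<And>z. z \<in> B \<Longrightarrow> g z \<le> 1 + avgl n0 G g z"
    and gC: "\<And>z. z \<in> G \<Longrightarrow> g z \<le> C"
    and "z \<in> G"
  shows "g z \<le> er n0 G B k z + C * qr n0 G B k z"
  using assms(5)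
proof (induction k arbitrary: z)
  case 0 then show ?case using gC by simp
next
  case (Suc k)
  show ?case
  proof (cases "z \<in> B")
    case True
    have "avgl n0 G g z \<le> avgl n0 G (\<lambda>w. er n0 G B k w + C * qr n0 G B k w) z"
      by (rule avgl_mono) (use Suc.IH nbr_list_sub in blast)
    then show ?thesis using True sub[OF True] by (simp add: avgl_add avgl_cmult er.simps(2) qr.simps(2))
  qed (use out Suc.prems in \<open>simp add: er.simps(2) qr.simps(2)\<close>)
qed

theorem lower_main:
  assumes nb: "\<forall>z\<in>B. nbr_list n0 G z \<noteq> []"
    and out: "\<And>z. z \<in> G \<Longrightarrow> z \<notin> B \<Longrightarrow> g z \<le> 0"
    and sub: "\<And>z. z \<in> B \<Longrightarrow> g z \<le> 1 + avgl n0 G g z"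
    and gC: "\<And>z. z \<in> G \<Longrightarrow> g z \<le> C"
    and C0: "0 \<le> C"
    and x: "x \<in> G"
  shows "ennreal (g x) \<le> exp_exit n0 G B x"
proof (cases "exp_exit n0 G B x = \<infinity>")
  case True then show ?thesis by simp
next
  case False
  define F where "F = enn2real (exp_exit n0 G B x)"
  have EF: "exp_exit n0 G B x = ennreal F"
    using False unfolding F_def by (simp add: ennreal_enn2real less_top)
  have bd: "er n0 G B k x \<le> F" for k
  proof -
    have "ennreal (er n0 G B k x) \<le> ennreal F"
      using exp_exit_ge[of n0 G B k x] ET_er[OF nb, of k x] EF by simp
    then show ?thesis using er_nonneg[of n0 G B k x] F_def
      by (auto simp add: ennreal_le_iff2)
  qed
  have le: "g x \<le> F + C * qr n0 G B (Suc j) x" for j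
  proof -
    have "g x \<le> er n0 G B (Suc j) x + C * qr n0 G B (Suc j) x"
      by (rule sub_bound[OF nb out sub gC x])
    then show ?thesis using bd[of "Suc j"] by linarith
  qed
  have lim: "(\<lambda>j. F + C * qr n0 G B (Suc j) x) \<longlonglongrightarrow> F + C * 0"
    by (intro tendsto_intros qr_tendsto[OF nb bd])
  have "g x \<le> F + C * 0"
    by (rule LIMSEQ_le_const[OF lim]) (use le in blast)
  then have "ennreal (g x) \<le> ennreal F" by (simp add: ennreal_leI)
  then show ?thesis using EF by simp
qed


lemma tadj_sym: "tadj x y \<Longrightarrow> tadj y x"
  unfolding tadj_def by auto

lemma tadj_irrefl: "\<not> tadj x x"
  unfolding tadj_def by auto

lemma tadj_cases: "tadj y w \<Longrightarrow> (\<exists>i. w = y @ [i]) \<or> (y \<noteq> [] \<and> w = butlast y)"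
  unfolding tadj_def by auto

lemma tadj_len: "tadj x y \<Longrightarrow> length y = Suc (length x) \<or> length x = Suc (length y)"
  unfolding tadj_def by auto

lemma gwalk_Cons: "gwalk G (x # p) \<longleftrightarrow> x \<in> G \<and> (p = [] \<or> (tadj x (hd p) \<and> gwalk G p))"
proof
  assume h: "gwalk G (x # p)"
  show "x \<in> G \<and> (p = [] \<or> (tadj x (hd p) \<and> gwalk G p))"
  proof (cases p)
    case Nil then show ?thesis using h by (simp add: gwalk_def)
  next
    case (Cons y q)
    have "tadj x y" using h Cons unfolding gwalk_def by (metis Suc_less_eq length_Cons nth_Cons_0 nth_Cons_Suc zero_less_Suc)
    moreover have "gwalk G p"
    proof -
      have "p \<noteq> []" "set p \<subseteq> G" using h Cons unfolding gwalk_def by auto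
      moreover have "tadj (p ! i) (p ! Suc i)" if "Suc i < length p" for i
        using h that unfolding gwalk_def by (metis Suc_less_eq length_Cons nth_Cons_Suc)
      ultimately show ?thesis unfolding gwalk_def by auto
    qed
    ultimately show ?thesis using h Cons by (simp add: gwalk_def)
  qed
next
  assume h: "x \<in> G \<and> (p = [] \<or> (tadj x (hd p) \<and> gwalk G p))"
  show "gwalk G (x # p)"
  proof (cases p)
    case Nil then show ?thesis using h by (simp add: gwalk_def)
  next
    case (Cons y q)
    have "tadj ((x # p) ! i) ((x # p) ! Suc i)" if "Suc i < length (x # p)" for i
    proof (cases i)
      case 0 then show ?thesis using h Cons by simp
    next
      case (Suc j) then show ?thesis using h that Cons unfolding gwalk_def by simp
    qed
    then show ?thesis using h Cons unfolding gwalk_def by auto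
  qed
qed

lemma gwalk_single[simp]: "gwalk G [x] \<longleftrightarrow> x \<in> G"
  by (simp add: gwalk_Cons)

lemma gwalk_Cons2: "gwalk G (x # y # p) \<longleftrightarrow> x \<in> G \<and> tadj x y \<and> gwalk G (y # p)"
  by (simp add: gwalk_Cons)

lemma gwalk_append:
  assumes "gwalk G p" "gwalk G q" "tadj (last p) (hd q)"
  shows "gwalk G (p @ q)"
  using assms
proof (induction p)
  case Nil then show ?case by (simp add: gwalk_def)
next
  case (Cons x p)
  have qne: "q \<noteq> []" using Cons.prems by (simp add: gwalk_def)
  show ?case
  proof (cases "p = []")
    case True
    then show ?thesis using Cons.prems qne by (auto simp: gwalk_Cons)
  next
    case False
    then have "gwalk G (p @ q)" "tadj x (hd p)" "x \<in> G" using Cons by (auto simp: gwalk_Cons)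
    then show ?thesis using False by (auto simp: gwalk_Cons)
  qed
qed

lemma gwalk_join:
  assumes "gwalk G p" "gwalk G q" "last p = hd q"
  shows "gwalk G (p @ tl q)"
proof (cases "tl q = []")
  case True then show ?thesis using assms by simp
next
  case False
  have "q = hd q # tl q" using assms(2) by (simp add: gwalk_def)
  then have "tadj (hd q) (hd (tl q))" "gwalk G (tl q)" using assms(2) False
    by (metis gwalk_Cons)+
  then show ?thesis using assms by (intro gwalk_append) auto
qed

lemma gwalk_rev: "gwalk G p \<Longrightarrow> gwalk G (rev p)"
proof (induction p)
  case Nil then show ?case by (simp add: gwalk_def)
next
  case (Cons x p)
  show ?case
  proof (cases "p = []")
    case True then show ?thesis using Cons by simp
  next
    case False
    have "gwalk G (rev p)" "tadj (hd p) x" "x \<in> G"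
      using Cons.IH Cons.prems False by (auto simp: gwalk_Cons tadj_sym)
    then have "gwalk G (rev p @ [x])"
      using False by (intro gwalk_append) (auto simp: last_rev)
    then show ?thesis by simp
  qed
qed

lemma gwalk_drop: "gwalk G p \<Longrightarrow> i < length p \<Longrightarrow> gwalk G (drop i p)"
  unfolding gwalk_def by (auto dest: in_set_dropD)

lemma gwalk_take: "gwalk G p \<Longrightarrow> 0 < i \<Longrightarrow> gwalk G (take i p)"
  unfolding gwalk_def by (auto dest: in_set_takeD)

lemma gwalk_nth_G: "gwalk G p \<Longrightarrow> i < length p \<Longrightarrow> p ! i \<in> G"
  unfolding gwalk_def by auto

lemma gwalk_adj: "gwalk G p \<Longrightarrow> Suc i < length p \<Longrightarrow> tadj (p ! i) (p ! Suc i)"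
  unfolding gwalk_def by auto

lemma gwalk_parity: "gwalk G p \<Longrightarrow> even (length p - 1 + length (hd p) + length (last p))"
proof (induction p)
  case Nil then show ?case by (simp add: gwalk_def)
next
  case (Cons x p)
  show ?case
  proof (cases "p = []")
    case True then show ?thesis by simp
  next
    case False
    then obtain y q where pq: "p = y # q" by (cases p) auto
    have "tadj x y" "gwalk G p" using Cons.prems pq by (auto simp: gwalk_Cons)
    then show ?thesis using Cons.IH pq tadj_len[of x y] by auto
  qed
qed

lemma gwalk_length_bound: "gwalk G p \<Longrightarrow> length (last p) \<le> length (hd p) + (length p - 1)"
proof (induction p)
  case Nil then show ?case by (simp add: gwalk_def)
next
  case (Cons x p)
  show ?case
  proof (cases "p = []")
    case True then show ?thesis by simp
  next
    case False
    then obtain y q where pq: "p = y # q" by (cases p) auto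
    have "tadj x y" "gwalk G p" using Cons.prems pq by (auto simp: gwalk_Cons)
    then show ?thesis using Cons.IH pq tadj_len[of x y] by auto
  qed
qed

definition ext :: "nat list \<Rightarrow> nat list \<Rightarrow> bool" where
  "ext w x \<longleftrightarrow> (\<exists>s. x = w @ s)"

lemma cross:
  assumes "gwalk G p" "ext w (hd p)" "\<not> ext w (last p)"
  shows "\<exists>i. Suc i < length p \<and> p ! i = w \<and> p ! Suc i = butlast w \<and> w \<noteq> []"
  using assms
proof (induction p)
  case Nil then show ?case by (simp add: gwalk_def)
next
  case (Cons x q)
  show ?case
  proof (cases "q = []")
    case True then show ?thesis using Cons.prems by simp
  next
    case False
    then obtain y q' where qq: "q = y # q'" by (cases q) auto
    have adj: "tadj x y" and gq: "gwalk G q" using Cons.prems qq by (auto simp: gwalk_Cons)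
    show ?thesis
    proof (cases "ext w y")
      case True
      then obtain i where "Suc i < length q \<and> q ! i = w \<and> q ! Suc i = butlast w \<and> w \<noteq> []"
        using Cons.IH gq Cons.prems qq by auto
      then show ?thesis by (intro exI[of _ "Suc i"]) auto
    next
      case False
      obtain s where xs: "x = w @ s" using Cons.prems by (auto simp: ext_def)
      from tadj_cases[OF adj] show ?thesis
      proof (elim disjE)
        assume ch: "\<exists>i. y = x @ [i]"
        then show ?thesis using False xs by (auto simp: ext_def)
      next
        assume pa: "x \<noteq> [] \<and> y = butlast x"
        show ?thesis
        proof (cases "s = []")
          case True
          then show ?thesis using pa xs qq by (intro exI[of _ 0]) auto
        next
          case sne: False
          have "y = w @ butlast s" using pa xs sne by (simp add: butlast_append)
          then show ?thesis using False by (auto simp: ext_def)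
        qed
      qed
    qed
  qed
qed


locale tg =
  fixes n0 :: nat and G :: "nat list set"
  assumes tv: "\<forall>v\<in>G. tree_vertex n0 v" and infG: "infinite G" and conn: "connected_sub G"
begin

abbreviation "d \<equiv> gdist G"

lemma walk_ex: "x \<in> G \<Longrightarrow> y \<in> G \<Longrightarrow> \<exists>p. gwalk G p \<and> hd p = x \<and> last p = y"
  using conn unfolding connected_sub_def by auto

lemma geo_ex:
  assumes "x \<in> G" "y \<in> G"
  shows "\<exists>p. gwalk G p \<and> hd p = x \<and> last p = y \<and> length p = Suc (d x y)"
proof -
  obtain p where p: "gwalk G p" "hd p = x" "last p = y" using walk_ex[OF assms] by blast
  then have "\<exists>n p. gwalk G p \<and> hd p = x \<and> last p = y \<and> length p = Suc n"
    by (intro exI[of _ "length p - 1"] exI[of _ p]) (auto simp: gwalk_def)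
  then show ?thesis unfolding gdist_def by (rule LeastI_ex)
qed

lemma d_le: "gwalk G p \<Longrightarrow> hd p = x \<Longrightarrow> last p = y \<Longrightarrow> d x y \<le> length p - 1"
  unfolding gdist_def by (rule Least_le) (auto simp: gwalk_def)

lemma d_refl[simp]: "x \<in> G \<Longrightarrow> d x x = 0"
  using d_le[of "[x]" x x] by simp

lemma d_zero: "x \<in> G \<Longrightarrow> y \<in> G \<Longrightarrow> d x y = 0 \<Longrightarrow> x = y"
  using geo_ex[of x y] by (auto simp: length_Suc_conv)

lemma d_sym: "x \<in> G \<Longrightarrow> y \<in> G \<Longrightarrow> d x y = d y x"
proof -
  have le: "d a b \<le> d b a" if ab: "a \<in> G" "b \<in> G" for a b
  proof -
    obtain p where p: "gwalk G p" "hd p = b" "last p = a" "length p = Suc (d b a)"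
      using geo_ex[OF ab(2) ab(1)] by blast
    have "d a b \<le> length (rev p) - 1"
      by (rule d_le) (use p in \<open>auto simp: gwalk_rev hd_rev last_rev\<close>)
    then show ?thesis using p by simp
  qed
  assume "x \<in> G" "y \<in> G"
  then show ?thesis using le[of x y] le[of y x] by simp
qed

lemma d_tri: "x \<in> G \<Longrightarrow> y \<in> G \<Longrightarrow> z \<in> G \<Longrightarrow> d x z \<le> d x y + d y z"
proof -
  assume G: "x \<in> G" "y \<in> G" "z \<in> G"
  obtain p where p: "gwalk G p" "hd p = x" "last p = y" "length p = Suc (d x y)"
    using geo_ex G by blast
  obtain q where q: "gwalk G q" "hd q = y" "last q = z" "length q = Suc (d y z)"
    using geo_ex G by blast
  have "gwalk G (p @ tl q)" using p q by (intro gwalk_join) auto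
  moreover have "last (p @ tl q) = z" using p q
    by (cases q) (auto simp: gwalk_def)
  moreover have "hd (p @ tl q) = x" using p by (cases p) (auto simp: gwalk_def)
  ultimately have "d x z \<le> length (p @ tl q) - 1" by (intro d_le)
  then show ?thesis using p q by simp
qed

lemma d_sub_from: "gwalk G p \<Longrightarrow> last p = y \<Longrightarrow> k < length p \<Longrightarrow> d (p ! k) y \<le> length p - 1 - k"
  using d_le[of "drop k p" "p ! k" y] by (auto simp: gwalk_drop hd_drop_conv_nth)

lemma d_sub_to: "gwalk G p \<Longrightarrow> hd p = x \<Longrightarrow> k < length p \<Longrightarrow> d x (p ! k) \<le> k"
proof -
  assume a: "gwalk G p" "hd p = x" "k < length p"
  have "gwalk G (take (Suc k) p)" using a by (intro gwalk_take) auto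
  moreover have "hd (take (Suc k) p) = x" using a by (simp add: hd_take)
  moreover have "last (take (Suc k) p) = p ! k" using a by (simp add: take_Suc_conv_app_nth)
  ultimately have "d x (p ! k) \<le> length (take (Suc k) p) - 1" by (rule d_le)
  then show ?thesis using a by simp
qed

lemma d_sub_mid: "gwalk G p \<Longrightarrow> i \<le> j \<Longrightarrow> j < length p \<Longrightarrow> d (p ! i) (p ! j) \<le> j - i"
proof -
  assume a: "gwalk G p" "i \<le> j" "j < length p"
  have "gwalk G (drop i p)" using a by (intro gwalk_drop) auto
  moreover have "hd (drop i p) = p ! i" using a by (simp add: hd_drop_conv_nth)
  moreover have "j - i < length (drop i p)" using a by simp
  ultimately have "d (p ! i) (drop i p ! (j - i)) \<le> j - i" by (rule d_sub_to)
  then show ?thesis using a by simp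
qed

lemma d_adj: "x \<in> G \<Longrightarrow> y \<in> G \<Longrightarrow> tadj x y \<Longrightarrow> d x y = 1"
proof -
  assume a: "x \<in> G" "y \<in> G" "tadj x y"
  have "gwalk G [x, y]" using a by (simp add: gwalk_Cons)
  then have "d x y \<le> 1" using d_le[of "[x,y]" x y] by simp
  moreover have "x \<noteq> y" using a tadj_irrefl by blast
  then have "d x y \<noteq> 0" using d_zero a by blast
  ultimately show ?thesis by simp
qed

lemma d_parity: "x \<in> G \<Longrightarrow> y \<in> G \<Longrightarrow> even (d x y + length x + length y)"
  using geo_ex[of x y] gwalk_parity by fastforce

lemma d_len: "x \<in> G \<Longrightarrow> y \<in> G \<Longrightarrow> length y \<le> length x + d x y"
  using geo_ex[of x y] gwalk_length_bound by fastforce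


definition nb :: "nat list \<Rightarrow> nat list set" where
  "nb y = {w\<in>G. tadj y w}"

lemma child_lt: "y @ [i] \<in> G \<Longrightarrow> i < n0"
  using tv unfolding tree_vertex_def by auto

lemma nb_sub: "nb y \<subseteq> insert (butlast y) ((\<lambda>i. y @ [i]) ` {..<n0})"
  unfolding nb_def using tadj_cases child_lt by fastforce

lemma finite_nb[simp]: "finite (nb y)"
  by (rule finite_subset[OF nb_sub]) simp

lemma gdeg_nb: "gdeg G y = card (nb y)"
  unfolding gdeg_def nb_def ..

lemma nb_G: "w \<in> nb y \<Longrightarrow> w \<in> G"
  unfolding nb_def by auto

lemma nb_adj: "w \<in> nb y \<Longrightarrow> tadj y w"
  unfolding nb_def by auto

lemma other_ex: "\<exists>v\<in>G. v \<noteq> y"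
proof (rule ccontr)
  assume "\<not> (\<exists>v\<in>G. v \<noteq> y)"
  then have "G \<subseteq> {y}" by auto
  then show False using infG finite_subset by blast
qed

lemma walk_second:
  assumes "gwalk G p" "Suc 0 < length p"
  shows "p ! 1 \<in> nb (p ! 0)"
  using assms unfolding nb_def by (auto simp: gwalk_nth_G dest: gwalk_adj[of G p 0])

lemma nb_ne: "y \<in> G \<Longrightarrow> nb y \<noteq> {}"
proof -
  assume y: "y \<in> G"
  obtain v where v: "v \<in> G" "v \<noteq> y" using other_ex by blast
  obtain p where p: "gwalk G p" "hd p = y" "last p = v" "length p = Suc (d y v)"
    using geo_ex[OF y v(1)] by blast
  have "d y v \<noteq> 0" using d_zero[OF y v(1)] v by auto
  then have "Suc 0 < length p" using p by simp
  then have "p ! 1 \<in> nb (p ! 0)" using p by (intro walk_second) auto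
  moreover have "p ! 0 = y" using p by (simp add: hd_conv_nth[symmetric] gwalk_def)
  ultimately show ?thesis by auto
qed

lemma deg_pos: "y \<in> G \<Longrightarrow> 0 < gdeg G y"
  using nb_ne by (simp add: gdeg_nb card_gt_0_iff)

lemma closer_ex:
  assumes "y \<in> G" "a \<in> G" "y \<noteq> a"
  shows "\<exists>w\<in>nb y. d w a + 1 = d y a"
proof -
  obtain p where p: "gwalk G p" "hd p = y" "last p = a" "length p = Suc (d y a)"
    using geo_ex[OF assms(1,2)] by blast
  have "d y a \<noteq> 0" using d_zero[OF assms(1,2)] assms by auto
  then have l: "Suc 0 < length p" using p by simp
  then have "p ! 1 \<in> nb (p ! 0)" using p by (intro walk_second) auto
  moreover have "p ! 0 = y" using p by (simp add: hd_conv_nth[symmetric] gwalk_def)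
  moreover have "d (p ! 1) a \<le> d y a - 1" using d_sub_from[OF p(1) p(3), of 1] l p by simp
  moreover have "d y a \<le> d y (p ! 1) + d (p ! 1) a"
    using assms calculation by (intro d_tri) (auto simp: nb_G)
  moreover have "d y (p ! 1) = 1" using calculation assms by (intro d_adj) (auto simp: nb_G nb_adj)
  ultimately show ?thesis using \<open>d y a \<noteq> 0\<close> by (intro bexI[of _ "p ! 1"]) auto
qed

lemma U1:
  assumes "y \<in> G" "y @ [i] \<in> G" "a \<in> G" "d (y @ [i]) a < d y a"
  shows "ext (y @ [i]) a"
proof (rule ccontr)
  assume ne: "\<not> ext (y @ [i]) a"
  obtain p where p: "gwalk G p" "hd p = y @ [i]" "last p = a" "length p = Suc (d (y @ [i]) a)"
    using geo_ex[OF assms(2,3)] by blast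
  obtain j where j: "Suc j < length p" "p ! j = y @ [i]" "p ! Suc j = butlast (y @ [i])"
    using cross[OF p(1), of "y @ [i]"] p ne by (auto simp: ext_def)
  have "d (p ! Suc j) a \<le> length p - 1 - Suc j" by (rule d_sub_from[OF p(1) p(3) j(1)])
  then have "d y a \<le> length p - 1 - Suc j" using j by simp
  then show False using p assms(4) j by simp
qed

lemma U2:
  assumes "y \<in> G" "y \<noteq> []" "butlast y \<in> G" "a \<in> G" "d (butlast y) a < d y a"
  shows "\<not> ext y a"
proof
  assume e: "ext y a"
  obtain p where p: "gwalk G p" "hd p = butlast y" "last p = a" "length p = Suc (d (butlast y) a)"
    using geo_ex[OF assms(3,4)] by blast
  have ne: "\<not> ext y (butlast y)"
  proof
    assume "ext y (butlast y)"
    then obtain s where "butlast y = y @ s" by (auto simp: ext_def)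
    then have "length (butlast y) = length y + length s" by simp
    then show False using assms(2) length_butlast[of y] by (cases y) (auto split: if_splits)
  qed
  obtain j where j: "Suc j < length (rev p)" "rev p ! j = y"
    using cross[OF gwalk_rev[OF p(1)], of y] p e ne by (auto simp: hd_rev last_rev)
  define k where "k = length p - 1 - j"
  have k: "k < length p" "p ! k = y" using j by (auto simp: k_def rev_nth)
  have "k \<noteq> 0"
  proof
    assume "k = 0"
    then have "y = hd p" using k p(1) by (simp add: hd_conv_nth gwalk_def)
    then show False using p(2) ne by (auto simp: ext_def)
  qed
  have "d (p ! k) a \<le> length p - 1 - k" by (rule d_sub_from[OF p(1) p(3) k(1)])
  then show False using k \<open>k \<noteq> 0\<close> p assms(5) by simp
qed

lemma uniq_closer:
  assumes "y \<in> G" "a \<in> G" "w1 \<in> nb y" "w2 \<in> nb y" "d w1 a < d y a" "d w2 a < d y a"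
  shows "w1 = w2"
proof -
  have c: "\<And>w. w \<in> nb y \<Longrightarrow> (\<exists>i. w = y @ [i]) \<or> (y \<noteq> [] \<and> w = butlast y)"
    using tadj_cases nb_adj by blast
  have ch: "ext w a" if "w \<in> nb y" "d w a < d y a" "w = y @ [i]" for w i
    using U1[OF assms(1) _ assms(2), of i] that nb_G by auto
  have pa: "\<not> ext y a" if "w \<in> nb y" "d w a < d y a" "y \<noteq> []" "w = butlast y" for w
    using U2[OF assms(1) that(3) _ assms(2)] that nb_G by auto
  from c[OF assms(3)] c[OF assms(4)] show ?thesis
  proof (elim disjE exE conjE)
    fix i j assume w1: "w1 = y @ [i]" and w2: "w2 = y @ [j]"
    have "ext (y @ [i]) a" "ext (y @ [j]) a" using ch assms w1 w2 by blast+
    then have "i = j" by (auto simp: ext_def)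
    then show ?thesis using w1 w2 by simp
  next
    fix i assume w1: "w1 = y @ [i]" and "y \<noteq> []" and w2: "w2 = butlast y"
    have "ext (y @ [i]) a" using ch assms w1 by blast
    moreover have "\<not> ext y a" using pa assms w2 \<open>y \<noteq> []\<close> by blast
    ultimately show ?thesis by (auto simp: ext_def)
  next
    fix j assume w2: "w2 = y @ [j]" and "y \<noteq> []" and w1: "w1 = butlast y"
    have "ext (y @ [j]) a" using ch assms w2 by blast
    moreover have "\<not> ext y a" using pa assms w1 \<open>y \<noteq> []\<close> by blast
    ultimately show ?thesis by (auto simp: ext_def)
  qed simp
qed

lemma nb_dist:
  assumes "y \<in> G" "a \<in> G" "w \<in> nb y"
  shows "d w a = d y a + 1 \<or> d w a + 1 = d y a"
proof -
  have w: "w \<in> G" "tadj y w" using assms nb_G nb_adj by auto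
  have "d w y = 1" using d_adj[OF w(1) assms(1)] w tadj_sym by blast
  then have "d w a \<le> d y a + 1" "d y a \<le> d w a + 1"
    using d_tri[OF w(1) assms(1) assms(2)] d_tri[OF assms(1) w(1) assms(2)] d_sym[OF w(1) assms(1)] by auto
  moreover have "d w a \<noteq> d y a"
  proof
    assume eq: "d w a = d y a"
    have "even (d w a + length w + length a)" "even (d y a + length y + length a)"
      using d_parity w assms by auto
    moreover have "length w = Suc (length y) \<or> length y = Suc (length w)" using tadj_len[OF w(2)] by auto
    ultimately show False using eq by presburger
  qed
  ultimately show ?thesis by linarith
qed

lemma lap_d:
  assumes "y \<in> G" "a \<in> G"
  shows "(\<Sum>w\<in>nb y. real (d w a)) = real (gdeg G y) * real (d y a) + real (gdeg G y) - 2 + (if y = a then 2 else 0)"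
proof (cases "y = a")
  case True
  have "(\<Sum>w\<in>nb y. real (d w a)) = (\<Sum>w\<in>nb y. 1)"
  proof (intro sum.cong refl)
    fix w assume "w \<in> nb y"
    then have "w \<in> G" "tadj w a" using True nb_G nb_adj tadj_sym by blast+
    then show "real (d w a) = 1" using d_adj assms by simp
  qed
  then show ?thesis using True assms by (simp add: gdeg_nb)
next
  case False
  obtain w0 where w0: "w0 \<in> nb y" "d w0 a + 1 = d y a" using closer_ex[OF assms False] by blast
  have others: "d w a = d y a + 1" if "w \<in> nb y - {w0}" for w
  proof -
    have "\<not> d w a < d y a" using uniq_closer[OF assms _ w0(1), of w] that w0 by auto
    then show ?thesis using nb_dist[OF assms, of w] that by auto
  qed
  have "(\<Sum>w\<in>nb y. real (d w a)) = real (d w0 a) + (\<Sum>w\<in>nb y - {w0}. real (d w a))"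
    using w0 by (simp add: sum.remove)
  also have "(\<Sum>w\<in>nb y - {w0}. real (d w a)) = (\<Sum>w\<in>nb y - {w0}. real (d y a) + 1)"
    using others by (intro sum.cong refl) simp
  also have "\<dots> = (real (gdeg G y) - 1) * (real (d y a) + 1)"
  proof -
    have c: "1 \<le> card (nb y)" using w0(1) card_gt_0_iff[of "nb y"] by fastforce
    show ?thesis using w0 c by (simp add: gdeg_nb card_Diff_singleton of_nat_diff)
  qed
  finally show ?thesis using w0 False by (simp add: algebra_simps of_nat_diff)
qed

end


context tg begin

lemma set_nbr: "z \<in> G \<Longrightarrow> set (nbr_list n0 G z) = nb z"
proof
  show "set (nbr_list n0 G z) \<subseteq> nb z"
  proof
    fix w assume "w \<in> set (nbr_list n0 G z)"
    then have "(z \<noteq> [] \<and> butlast z \<in> G \<and> w = butlast z) \<or> (\<exists>i. w = z @ [i] \<and> w \<in> G)"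
      unfolding nbr_list_def by (auto split: if_splits)
    then show "w \<in> nb z"
    proof
      assume h: "z \<noteq> [] \<and> butlast z \<in> G \<and> w = butlast z"
      then have "z = butlast z @ [last z]" by simp
      then have "tadj z w" using h unfolding tadj_def by metis
      then show ?thesis using h by (simp add: nb_def)
    qed (auto simp: nb_def tadj_def)
  qed
next
  show "nb z \<subseteq> set (nbr_list n0 G z)"
  proof
    fix w assume w: "w \<in> nb z"
    then have wG: "w \<in> G" by (rule nb_G)
    from tadj_cases[OF nb_adj[OF w]] show "w \<in> set (nbr_list n0 G z)"
    proof
      assume "\<exists>i. w = z @ [i]"
      then obtain i where i: "w = z @ [i]" by blast
      then have "i < n0" using child_lt wG by simp
      then show ?thesis using i wG unfolding nbr_list_def by auto
    next
      assume "z \<noteq> [] \<and> w = butlast z"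
      then show ?thesis using wG unfolding nbr_list_def by auto
    qed
  qed
qed

lemma distinct_nbr: "distinct (nbr_list n0 G z)"
proof -
  have "distinct (map (\<lambda>i. z @ [i]) [0..<n0])" by (simp add: distinct_map inj_on_def)
  then have d: "distinct (filter (\<lambda>w. w \<in> G) (map (\<lambda>i. z @ [i]) [0..<n0]))" by simp
  have "butlast z \<notin> set (map (\<lambda>i. z @ [i]) [0..<n0])"
  proof
    assume "butlast z \<in> set (map (\<lambda>i. z @ [i]) [0..<n0])"
    then obtain i where "butlast z = z @ [i]" by auto
    then have "length (butlast z) = length z + 1" by simp
    then show False by simp
  qed
  then show ?thesis using d unfolding nbr_list_def by auto
qed

lemma nbr_ne: "z \<in> G \<Longrightarrow> nbr_list n0 G z \<noteq> []"
  using set_nbr nb_ne by fastforce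

lemma avgl_nb: "z \<in> G \<Longrightarrow> avgl n0 G h z = (\<Sum>w\<in>nb z. h w) / real (gdeg G z)"
proof -
  assume z: "z \<in> G"
  let ?l = "nbr_list n0 G z"
  have "(\<Sum>i<length ?l. h (?l ! i)) = sum_list (map h ?l)"
    by (simp add: sum_list_sum_nth atLeast0LessThan)
  also have "\<dots> = (\<Sum>w\<in>set ?l. h w)" by (rule sum_list_distinct_conv_sum_set[OF distinct_nbr])
  finally have "(\<Sum>i<length ?l. h (?l ! i)) = (\<Sum>w\<in>nb z. h w)" using set_nbr[OF z] by simp
  moreover have "length ?l = gdeg G z"
    using distinct_card[OF distinct_nbr, of z] set_nbr[OF z] gdeg_nb by simp
  ultimately show ?thesis unfolding avgl_def by simp
qed

definition gr :: "nat list \<Rightarrow> nat list \<Rightarrow> nat list \<Rightarrow> real" where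
  "gr e y z = (real (d y e) + real (d z e) - real (d y z)) / 2"

lemma lap_gr:
  assumes "y \<in> G" "z \<in> G" "e \<in> G"
  shows "(\<Sum>w\<in>nb y. gr e w z) = real (gdeg G y) * gr e y z + (if y = e then 1 else 0) - (if y = z then 1 else 0)"
proof -
  have "(\<Sum>w\<in>nb y. gr e w z) = ((\<Sum>w\<in>nb y. real (d w e)) + real (card (nb y)) * real (d z e) - (\<Sum>w\<in>nb y. real (d w z))) / 2"
    unfolding gr_def by (simp add: sum_divide_distrib[symmetric] sum.distrib sum_subtractf)
  also have "\<dots> = real (gdeg G y) * gr e y z + (if y = e then 1 else 0) - (if y = z then 1 else 0)"
  proof -
    have alg: "\<And>(D::real) a b c Se Sz i1 i2. Se = D*a + D - 2 + i1 \<Longrightarrow> Sz = D*c + D - 2 + i2 \<Longrightarrow>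
       (Se + D*b - Sz)/2 = D*((a + b - c)/2) + i1/2 - i2/2"
      by (simp add: field_simps)
    have "((\<Sum>w\<in>nb y. real (d w e)) + real (card (nb y)) * real (d z e) - (\<Sum>w\<in>nb y. real (d w z))) / 2
       = real (card (nb y)) * gr e y z + (if y = e then 2 else 0)/2 - (if y = z then 2 else 0)/2"
      unfolding gr_def by (rule alg) (use lap_d[OF assms(1) assms(3)] lap_d[OF assms(1) assms(2)] in \<open>simp_all add: gdeg_nb\<close>)
    then show ?thesis by (simp add: gdeg_nb)
  qed
  finally show ?thesis .
qed

lemma avgl_gr:
  assumes "y \<in> G" "z \<in> G" "e \<in> G"
  shows "avgl n0 G (\<lambda>w. gr e w z) y = gr e y z + ((if y = e then 1 else 0) - (if y = z then 1 else 0)) / real (gdeg G y)"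
  using deg_pos[OF assms(1)] by (simp add: avgl_nb[OF assms(1)] lap_gr[OF assms] field_simps)

lemma gr_nonneg: "y \<in> G \<Longrightarrow> z \<in> G \<Longrightarrow> e \<in> G \<Longrightarrow> 0 \<le> gr e y z"
  unfolding gr_def using d_tri[of y e z] d_sym[of e z] by simp

lemma gr_le1: "y \<in> G \<Longrightarrow> z \<in> G \<Longrightarrow> e \<in> G \<Longrightarrow> gr e y z \<le> d y e"
  unfolding gr_def using d_tri[of z y e] d_sym[of z y] by simp

lemma gr_le2: "y \<in> G \<Longrightarrow> z \<in> G \<Longrightarrow> e \<in> G \<Longrightarrow> gr e y z \<le> d z e"
  unfolding gr_def using d_tri[of y z e] by simp

lemma gr_ge: "y \<in> G \<Longrightarrow> z \<in> G \<Longrightarrow> e \<in> G \<Longrightarrow> real (d z e) - real (d y z) \<le> gr e y z"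
  unfolding gr_def using d_tri[of z y e] d_sym[of z y] by simp

lemma avgl_lin:
  assumes "finite S"
  shows "avgl n0 G (\<lambda>w. \<Sum>z\<in>S. c z * h z w) y = (\<Sum>z\<in>S. c z * avgl n0 G (h z) y)"
proof -
  let ?l = "nbr_list n0 G y"
  have "(\<Sum>i<length ?l. \<Sum>z\<in>S. c z * h z (?l ! i)) = (\<Sum>z\<in>S. \<Sum>i<length ?l. c z * h z (?l ! i))"
    by (rule sum.swap)
  also have "\<dots> = (\<Sum>z\<in>S. c z * (\<Sum>i<length ?l. h z (?l ! i)))"
    by (simp add: sum_distrib_left)
  finally show ?thesis unfolding avgl_def by (simp add: sum_divide_distrib[symmetric] times_divide_eq_right)
qed

end


context tg begin

lemma ball_iff: "y \<in> gball G x r \<longleftrightarrow> y \<in> G \<and> real (d x y) \<le> r"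
  unfolding gball_def by simp

lemma ball_G: "gball G x r \<subseteq> G"
  unfolding gball_def by auto

lemma finite_ball:
  assumes "x \<in> G"
  shows "finite (gball G x r)"
proof -
  have "gball G x r \<subseteq> {ys. set ys \<subseteq> {..<n0} \<and> length ys \<le> length x + nat \<lceil>r\<rceil>}"
  proof
    fix y assume y: "y \<in> gball G x r"
    then have yG: "y \<in> G" and dr: "real (d x y) \<le> r" by (auto simp: ball_iff)
    have "set y \<subseteq> {..<n0}" using tv yG unfolding tree_vertex_def by auto
    moreover have "d x y \<le> nat \<lceil>r\<rceil>" using dr by linarith
    moreover have "length y \<le> length x + d x y" by (rule d_len[OF assms yG])
    ultimately show "y \<in> {ys. set ys \<subseteq> {..<n0} \<and> length ys \<le> length x + nat \<lceil>r\<rceil>}" by auto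
  qed
  moreover have "finite {ys. set ys \<subseteq> {..<n0} \<and> length ys \<le> length x + nat \<lceil>r\<rceil>}"
    by (rule finite_lists_length_le) simp
  ultimately show ?thesis by (rule finite_subset)
qed

lemma others_far:
  assumes "y \<in> G" "a \<in> G" "w0 \<in> nb y" "d w0 a + 1 = d y a" "w \<in> nb y" "w \<noteq> w0"
  shows "d w a = d y a + 1"
proof -
  have "\<not> d w a < d y a" using uniq_closer[OF assms(1,2) assms(5) assms(3)] assms by auto
  then show ?thesis using nb_dist[OF assms(1,2,5)] by auto
qed

definition fA :: "nat list \<Rightarrow> nat list set \<Rightarrow> nat list \<Rightarrow> real" where
  "fA e B y = (\<Sum>z\<in>B. real (gdeg G z) * gr e y z)"

lemma fA_nonneg: "B \<subseteq> G \<Longrightarrow> e \<in> G \<Longrightarrow> y \<in> G \<Longrightarrow> 0 \<le> fA e B y"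
  unfolding fA_def by (intro sum_nonneg mult_nonneg_nonneg) (auto intro: gr_nonneg)

lemma fA_super:
  assumes B: "finite B" "B \<subseteq> G" and e: "e \<in> G" "e \<notin> B" and y: "y \<in> B"
  shows "1 + avgl n0 G (fA e B) y \<le> fA e B y"
proof -
  have yG: "y \<in> G" using y B by auto
  have Dy: "0 < real (gdeg G y)" using deg_pos[OF yG] by simp
  have "avgl n0 G (fA e B) y = (\<Sum>z\<in>B. real (gdeg G z) * avgl n0 G (\<lambda>w. gr e w z) y)"
    unfolding fA_def[abs_def] by (rule avgl_lin[OF B(1)])
  also have "\<dots> = (\<Sum>z\<in>B. real (gdeg G z) * gr e y z - (if z = y then 1 else 0))"
  proof (intro sum.cong refl)
    fix z assume z: "z \<in> B"
    then have zG: "z \<in> G" using B by auto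
    have "y \<noteq> e" using y e by auto
    then show "real (gdeg G z) * avgl n0 G (\<lambda>w. gr e w z) y = real (gdeg G z) * gr e y z - (if z = y then 1 else 0)"
      using Dy by (auto simp: avgl_gr[OF yG zG e(1)] field_simps)
  qed
  also have "\<dots> = fA e B y - 1"
    using y B(1) by (simp add: sum_subtractf fA_def)
  finally show ?thesis by simp
qed


lemma in_ball_R:
  assumes "0 \<le> r"
  shows "y \<in> gball G x r \<longleftrightarrow> y \<in> G \<and> d x y \<le> nat \<lfloor>r\<rfloor>"
  unfolding ball_iff using assms by (auto simp: le_nat_floor) linarith

lemma exists_e0:
  fixes r :: real
  assumes x0: "x0 \<in> G" and r: "1 \<le> r"
  defines "R \<equiv> nat \<lfloor>r\<rfloor>"
  shows "\<exists>e0 u. e0 \<in> G \<and> d x0 e0 = R + 1 \<and> u \<in> G \<and> d x0 u \<le> 1 \<and> d u e0 \<le> R \<and> 2 \<le> gdeg G u"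
proof -
  have "(1::int) \<le> \<lfloor>r\<rfloor>" using r by simp
  then have R1: "1 \<le> R" unfolding R_def by linarith
  have "\<not> G \<subseteq> gball G x0 r" using finite_ball[OF x0, of r] infG finite_subset by blast
  then obtain v where v: "v \<in> G" "v \<notin> gball G x0 r" by blast
  then have dv: "R + 1 \<le> d x0 v" using in_ball_R[of r v x0] r unfolding R_def by auto
  obtain p where p: "gwalk G p" "hd p = x0" "last p = v" "length p = Suc (d x0 v)"
    using geo_ex[OF x0 v(1)] by blast
  have p0: "p ! 0 = x0" using p by (simp add: hd_conv_nth[symmetric] gwalk_def)
  define e0 where "e0 = p ! (R + 1)"
  define u where "u = p ! 1"
  have lR: "R + 1 < length p" using dv p by simp
  have e0G: "e0 \<in> G" unfolding e0_def using gwalk_nth_G[OF p(1) lR] .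
  have uG: "u \<in> G" unfolding u_def using gwalk_nth_G[OF p(1)] lR by simp
  have a1: "d x0 e0 \<le> R + 1" unfolding e0_def using d_sub_to[OF p(1) p(2) lR] .
  have a2: "d e0 v \<le> length p - 1 - (R + 1)" unfolding e0_def using d_sub_from[OF p(1) p(3) lR] .
  have "d x0 v \<le> d x0 e0 + d e0 v" by (rule d_tri[OF x0 e0G v(1)])
  then have de0: "d x0 e0 = R + 1" using a1 a2 p(4) dv by simp
  have du: "d x0 u \<le> 1" unfolding u_def using d_sub_to[OF p(1) p(2)] lR by simp
  have due: "d u e0 \<le> R" unfolding u_def e0_def using d_sub_mid[OF p(1), of 1 "R + 1"] lR by simp
  have l2: "2 < length p" using lR R1 by simp
  have p2G: "p ! 2 \<in> G" using gwalk_nth_G[OF p(1) l2] .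
  have "p ! 0 \<in> nb u" unfolding u_def nb_def
    using gwalk_adj[OF p(1), of 0] l2 p0 x0 tadj_sym by (auto simp: One_nat_def)
  moreover have "p ! 2 \<in> nb u" unfolding u_def nb_def
    using gwalk_adj[OF p(1), of 1] l2 p2G by (auto simp: numeral_2_eq_2)
  moreover have "p ! 0 \<noteq> p ! 2"
  proof
    assume eq: "p ! 0 = p ! 2"
    have "d (p ! 2) e0 \<le> R + 1 - 2" unfolding e0_def using d_sub_mid[OF p(1), of 2 "R + 1"] lR R1 by simp
    moreover have "d x0 e0 \<le> d x0 (p ! 2) + d (p ! 2) e0" by (rule d_tri[OF x0 p2G e0G])
    ultimately show False using eq p0 de0 x0 R1 by simp
  qed
  ultimately have "card {p ! 0, p ! 2} \<le> card (nb u)" by (intro card_mono) auto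
  then have "2 \<le> gdeg G u" using \<open>p ! 0 \<noteq> p ! 2\<close> by (simp add: gdeg_nb)
  then show ?thesis using e0G de0 uG du due by blast
qed


lemma fA_bound:
  fixes r :: real
  assumes x0: "x0 \<in> G" and r: "1 \<le> r" and x: "x \<in> gball G x0 r"
  shows "\<exists>e\<in>G. e \<notin> gball G x0 r \<and> fA e (gball G x0 r) x \<le> 2 * r * gvol G x0 r"
proof -
  define B where "B = gball G x0 r"
  define R where "R = nat \<lfloor>r\<rfloor>"
  have "(1::int) \<le> \<lfloor>r\<rfloor>" using r by simp
  then have R1: "1 \<le> R" and Rr: "real R \<le> r" unfolding R_def by linarith+
  have finB: "finite B" unfolding B_def by (rule finite_ball[OF x0])
  have BG: "B \<subseteq> G" unfolding B_def by (rule ball_G)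
  have inB: "\<And>y. y \<in> B \<longleftrightarrow> y \<in> G \<and> d x0 y \<le> R" unfolding B_def R_def using in_ball_R r by simp
  have xB: "x \<in> B" using x B_def by simp
  have xG: "x \<in> G" using xB BG by auto
  define V where "V = (\<Sum>z\<in>B. real (gdeg G z))"
  have V: "gvol G x0 r = V" unfolding V_def B_def gvol_def ..
  have V0: "0 \<le> V" unfolding V_def by (simp add: sum_nonneg)
  have gen: "fA e B x \<le> c * V" if e: "e \<in> G" and c: "\<And>z. z \<in> B \<Longrightarrow> gr e x z \<le> c" for e c
  proof -
    have "fA e B x \<le> (\<Sum>z\<in>B. real (gdeg G z) * c)"
      unfolding fA_def by (intro sum_mono mult_left_mono c) auto
    then show ?thesis by (simp add: V_def sum_distrib_left mult.commute)
  qed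
  show ?thesis
  proof (cases "\<exists>w\<in>nb x. w \<notin> B")
    case True
    then obtain w where w: "w \<in> nb x" "w \<notin> B" by blast
    have wG: "w \<in> G" using w nb_G by auto
    have dxw: "d x w = 1" using d_adj[OF xG wG nb_adj[OF w(1)]] .
    have "fA w B x \<le> 1 * V"
      by (rule gen[OF wG]) (use gr_le1[OF xG _ wG] dxw BG in auto)
    also have "\<dots> \<le> 2 * r * V" using V0 r mult_right_mono[of 1 "2 * r" V] by simp
    finally show ?thesis using w wG V unfolding B_def by auto
  next
    case False
    then have nbB: "nb x \<subseteq> B" by auto
    obtain e0 u where eu: "e0 \<in> G" "d x0 e0 = R + 1" "u \<in> G" "d x0 u \<le> 1" "d u e0 \<le> R" "2 \<le> gdeg G u"
      using exists_e0[OF x0 r] unfolding R_def by blast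
    have e0B: "e0 \<notin> B" using inB eu by simp
    have dxx0: "d x0 x \<le> R" using inB xB by simp
    have dxe: "d x e0 \<le> 2 * R + 1"
      using d_tri[OF xG x0 eu(1)] d_sym[OF xG x0] dxx0 eu(2) by simp
    show ?thesis
    proof (cases "d x e0 \<le> 2 * R")
      case True
      have "fA e0 B x \<le> (2 * R) * V"
        by (rule gen[OF eu(1)]) (use gr_le1[OF xG _ eu(1)] True BG in force)
      also have "\<dots> \<le> 2 * r * V" using Rr V0 by (simp add: mult_right_mono)
      finally show ?thesis using e0B eu V unfolding B_def by auto
    next
      case False
      then have dxe': "d x e0 = 2 * R + 1" using dxe by simp
      have dx0x: "d x0 x = R"
        using d_tri[OF xG x0 eu(1)] d_sym[OF xG x0] dxx0 eu(2) dxe' by simp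
      have xx0: "x \<noteq> x0" using dx0x R1 x0 by auto
      obtain w0 where w0: "w0 \<in> nb x" "d w0 x0 + 1 = d x x0" using closer_ex[OF xG x0 xx0] by blast
      have "nb x \<subseteq> {w0}"
      proof
        fix w assume w: "w \<in> nb x"
        show "w \<in> {w0}"
        proof (rule ccontr)
          assume "w \<notin> {w0}"
          then have "d w x0 = d x x0 + 1" using others_far[OF xG x0 w0 w] by simp
          moreover have "w \<in> G" using w nb_G by auto
          ultimately have "d x0 w = R + 1" using d_sym[OF x0] d_sym[OF x0 xG] dx0x by simp
          then have "w \<notin> B" using inB by simp
          then show False using w nbB by auto
        qed
      qed
      then have "card (nb x) \<le> 1" using card_mono[of "{w0}" "nb x"] by simp
      then have Dx: "gdeg G x = 1" using deg_pos[OF xG] by (simp add: gdeg_nb)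
      have ux: "u \<noteq> x" using eu(5) dxe' d_sym[OF xG eu(1)] d_sym[OF eu(3) eu(1)] by auto
      have uB: "u \<in> B" using inB eu R1 by simp
      define b where "b z = 2 * real R + (if z = x then 1 else 0) - (if z = u then real R else 0)" for z
      have grb: "gr e0 x z \<le> b z" if z: "z \<in> B" for z
      proof -
        have zG: "z \<in> G" using z BG by auto
        show ?thesis
        proof (cases "z = x")
          case True
          then show ?thesis using gr_le1[OF xG zG eu(1)] dxe' ux by (simp add: b_def)
        next
          case zx: False
          show ?thesis
          proof (cases "z = u")
            case True
            then show ?thesis using gr_le2[OF xG zG eu(1)] eu(5) zx by (simp add: b_def)
          next
            case zu: False
            have p1: "even (d x e0 + length x + length e0)" using d_parity[OF xG eu(1)] .
            have p2: "even (d z e0 + length z + length e0)" using d_parity[OF zG eu(1)] .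
            have p3: "even (d x z + length x + length z)" using d_parity[OF xG zG] .
            have dze: "d z e0 \<le> 2 * R + 1"
              using d_tri[OF zG x0 eu(1)] d_sym[OF zG x0] inB z eu(2) by simp
            have dxz: "1 \<le> d x z" using d_zero[OF xG zG] zx by (cases "d x z") auto
            have "d x e0 + d z e0 \<le> 4 * R + d x z"
              using p1 p2 p3 dze dxz dxe by presburger
            then have "gr e0 x z \<le> 2 * real R"
              unfolding gr_def by simp
            then show ?thesis using zx zu by (simp add: b_def)
          qed
        qed
      qed
      have "fA e0 B x \<le> (\<Sum>z\<in>B. real (gdeg G z) * b z)"
        unfolding fA_def by (intro sum_mono mult_left_mono grb) auto
      also have "\<dots> = 2 * real R * V + real (gdeg G x) - real R * real (gdeg G u)"
      proof -
        have pw: "real (gdeg G z) * b z = 2 * real R * real (gdeg G z) + (if z = x then real (gdeg G z) else 0) - (if z = u then real R * real (gdeg G z) else 0)" for z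
          by (simp add: b_def algebra_simps)
        have "(\<Sum>z\<in>B. real (gdeg G z) * b z) = (\<Sum>z\<in>B. 2 * real R * real (gdeg G z)) + (\<Sum>z\<in>B. if z = x then real (gdeg G z) else 0) - (\<Sum>z\<in>B. if z = u then real R * real (gdeg G z) else 0)"
          unfolding pw by (simp add: sum.distrib sum_subtractf)
        also have "\<dots> = 2 * real R * V + real (gdeg G x) - real R * real (gdeg G u)"
          using xB uB finB by (simp add: sum.delta' V_def sum_distrib_left)
        finally show ?thesis .
      qed
      also have "\<dots> \<le> 2 * r * V"
      proof -
        have "real R * real (gdeg G u) \<ge> 1 * 2" using R1 eu(6)
          by (intro mult_mono) auto
        then have "2 * real R * V + real (gdeg G x) - real R * real (gdeg G u) \<le> 2 * real R * V"
          using Dx by simp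
        also have "\<dots> \<le> 2 * r * V" using Rr V0 by (simp add: mult_right_mono)
        finally show ?thesis .
      qed
      finally show ?thesis using e0B eu V unfolding B_def by auto
    qed
  qed
qed

end


context tg begin

lemma partA:
  fixes r :: real
  assumes x0: "x0 \<in> G" and r: "1 \<le> r" and z: "z \<in> gball G x0 r"
  shows "exp_exit n0 G (gball G x0 r) z \<le> ennreal (2 * r * gvol G x0 r)"
proof -
  let ?B = "gball G x0 r"
  obtain e where e: "e \<in> G" "e \<notin> ?B" "fA e ?B z \<le> 2 * r * gvol G x0 r"
    using fA_bound[OF x0 r z] by blast
  have BG: "?B \<subseteq> G" by (rule ball_G)
  have finB: "finite ?B" by (rule finite_ball[OF x0])
  have zG: "z \<in> G" using z BG by auto
  have nbB: "\<forall>y\<in>?B. nbr_list n0 G y \<noteq> []" using BG nbr_ne by auto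
  have bd: "er n0 G ?B k z \<le> fA e ?B z" for k
    by (rule super_bound[OF _ _ zG]) (use fA_nonneg[OF BG e(1)] fA_super[OF finB BG e(1,2)] in auto)
  have "exp_exit n0 G ?B z \<le> ennreal (fA e ?B z)"
    by (rule upper_main[OF nbB bd])
  also have "\<dots> \<le> ennreal (2 * r * gvol G x0 r)" using e(3) by (rule ennreal_leI)
  finally show ?thesis .
qed

end

locale sepl = tg +
  fixes x0 :: "nat list" and r :: real and A :: "nat list set" and m :: nat
  assumes x0: "x0 \<in> G" and r1: "1 \<le> r" and finA: "finite A" and AG: "A \<subseteq> G"
    and cardA: "card A = m" and m1: "1 \<le> m"
    and Adist: "\<And>a. a \<in> A \<Longrightarrow> r / 4 \<le> real (d x0 a)"
    and sep: "\<And>p. gwalk G p \<Longrightarrow> hd p = x0 \<Longrightarrow> last p \<notin> gball G x0 r \<Longrightarrow> set p \<inter> A \<noteq> {}"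
begin

definition "rho = r / (32 * real m)"
definition "B1 = gball G x0 rho"
definition "B = gball G x0 r"

definition cz :: "nat list \<Rightarrow> real" where
  "cz z = (\<Sum>a\<in>A. real (d z a)) - real (Min ((\<lambda>a. d z a) ` A))"

definition psi :: "nat list \<Rightarrow> nat list \<Rightarrow> real" where
  "psi z y = (\<Sum>a\<in>A. (1 / real m) * gr a y z) + (- cz z / real m)"

definition gB :: "nat list \<Rightarrow> real" where
  "gB y = (\<Sum>z\<in>B1. real (gdeg G z) * psi z y)"

lemma Ane: "A \<noteq> {}" using cardA m1 by auto

lemma mpos: "0 < real m" using m1 by simp

lemma rho_small: "rho < r / 4"
proof -
  have "r / (32 * real m) \<le> r / 32" using m1 r1 by (intro divide_left_mono) auto
  then show ?thesis unfolding rho_def using r1 by simp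
qed

lemma rho_nonneg: "0 \<le> rho" unfolding rho_def using r1 by simp

lemma B1G: "B1 \<subseteq> G" unfolding B1_def by (rule ball_G)
lemma BG: "B \<subseteq> G" unfolding B_def by (rule ball_G)
lemma finB1: "finite B1" unfolding B1_def by (rule finite_ball[OF x0])

lemma Min_le: "z \<in> G \<Longrightarrow> a \<in> A \<Longrightarrow> Min ((\<lambda>a. d z a) ` A) \<le> d z a"
  using finA by (intro Min_le) auto

lemma cz_nonneg: "z \<in> G \<Longrightarrow> 0 \<le> cz z"
proof -
  assume zG: "z \<in> G"
  obtain a where a: "a \<in> A" using Ane by blast
  have "real (Min ((\<lambda>a. d z a) ` A)) \<le> real (d z a)" using Min_le[OF zG a] by simp
  also have "\<dots> \<le> (\<Sum>a\<in>A. real (d z a))" using a finA by (intro member_le_sum) auto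
  finally show ?thesis unfolding cz_def by simp
qed

lemma psi_avgl:
  assumes y: "y \<in> G" and z: "z \<in> G"
  shows "psi z y - (if y = z then 1 else 0) / real (gdeg G y) \<le> avgl n0 G (psi z) y"
proof -
  have Dy: "0 < real (gdeg G y)" using deg_pos[OF y] by simp
  have "avgl n0 G (psi z) y = avgl n0 G (\<lambda>w. \<Sum>a\<in>A. (1 / real m) * gr a w z) y + (- cz z / real m)"
    unfolding psi_def[abs_def] using avgl_add[of n0 G "\<lambda>w. \<Sum>a\<in>A. (1 / real m) * gr a w z" "\<lambda>w. - cz z / real m" y]
      avgl_const[OF nbr_ne[OF y]] by simp
  also have "avgl n0 G (\<lambda>w. \<Sum>a\<in>A. (1 / real m) * gr a w z) y = (\<Sum>a\<in>A. (1 / real m) * avgl n0 G (\<lambda>w. gr a w z) y)"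
    by (rule avgl_lin[OF finA])
  also have "\<dots> = (\<Sum>a\<in>A. (1 / real m) * (gr a y z + ((if y = a then 1 else 0) - (if y = z then 1 else 0)) / real (gdeg G y)))"
  proof (intro sum.cong refl)
    fix a assume "a \<in> A"
    then have aG: "a \<in> G" using AG by auto
    show "(1 / real m) * avgl n0 G (\<lambda>w. gr a w z) y = (1 / real m) * (gr a y z + ((if y = a then 1 else 0) - (if y = z then 1 else 0)) / real (gdeg G y))"
      by (subst avgl_gr[OF y z aG]) (rule refl)
  qed
  also have "\<dots> = (\<Sum>a\<in>A. (1 / real m) * gr a y z) + (1 / real m) * (\<Sum>a\<in>A. (if y = a then 1 else 0) / real (gdeg G y)) - (1 / real m) * (\<Sum>a\<in>A. (if y = z then 1 else 0) / real (gdeg G y))"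
    by (simp add: sum.distrib sum_subtractf sum_distrib_left algebra_simps diff_divide_distrib)
  also have "(1 / real m) * (\<Sum>a\<in>A. (if y = z then 1 else 0) / real (gdeg G y)) = (if y = z then 1 else 0) / real (gdeg G y)"
    using cardA mpos by simp
  finally have eq: "avgl n0 G (psi z) y = psi z y + (1 / real m) * (\<Sum>a\<in>A. (if y = a then 1 else 0) / real (gdeg G y)) - (if y = z then 1 else 0) / real (gdeg G y)"
    unfolding psi_def by simp
  have "0 \<le> (1 / real m) * (\<Sum>a\<in>A. (if y = a then 1 else 0) / real (gdeg G y))"
    using Dy by (intro mult_nonneg_nonneg sum_nonneg) auto
  then show ?thesis using eq by simp
qed

lemma gB_sub:
  assumes y: "y \<in> G"
  shows "gB y \<le> 1 + avgl n0 G gB y"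
proof -
  have Dy: "0 < real (gdeg G y)" using deg_pos[OF y] by simp
  have "avgl n0 G gB y = (\<Sum>z\<in>B1. real (gdeg G z) * avgl n0 G (psi z) y)"
    unfolding gB_def[abs_def] by (rule avgl_lin[OF finB1])
  also have "\<dots> \<ge> (\<Sum>z\<in>B1. real (gdeg G z) * (psi z y - (if y = z then 1 else 0) / real (gdeg G y)))"
    using B1G by (intro sum_mono mult_left_mono psi_avgl[OF y]) auto
  finally have "(\<Sum>z\<in>B1. real (gdeg G z) * (psi z y - (if y = z then 1 else 0) / real (gdeg G y))) \<le> avgl n0 G gB y" .
  moreover have "(\<Sum>z\<in>B1. real (gdeg G z) * (psi z y - (if y = z then 1 else 0) / real (gdeg G y)))
      = gB y - (\<Sum>z\<in>B1. if y = z then 1 else 0)"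
    unfolding gB_def using Dy by (simp add: right_diff_distrib sum_subtractf) (intro sum.cong refl, auto)
  moreover have "(\<Sum>z\<in>B1. (if y = z then 1 else 0 :: real)) \<le> 1"
    using finB1 by (simp add: sum.delta)
  ultimately show ?thesis by simp
qed


lemma hit_point:
  assumes z: "z \<in> B1" and y: "y \<in> G" "y \<notin> B"
  shows "\<exists>a\<in>A. d z a + d a y \<le> d z y"
proof -
  have zG: "z \<in> G" using z B1G by auto
  obtain q1 where q1: "gwalk G q1" "hd q1 = x0" "last q1 = z" "length q1 = Suc (d x0 z)"
    using geo_ex[OF x0 zG] by blast
  obtain q2 where q2: "gwalk G q2" "hd q2 = z" "last q2 = y" "length q2 = Suc (d z y)"
    using geo_ex[OF zG y(1)] by blast
  have gq: "gwalk G (q1 @ tl q2)" using q1 q2 by (intro gwalk_join) auto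
  have hq: "hd (q1 @ tl q2) = x0" using q1 by (cases q1) (auto simp: gwalk_def)
  have lq: "last (q1 @ tl q2) = y" using q1 q2 by (cases q2) (auto simp: gwalk_def)
  obtain a where a: "a \<in> A" "a \<in> set (q1 @ tl q2)"
    using sep[OF gq hq] lq y(2) unfolding B_def by blast
  show ?thesis
  proof (cases "a \<in> set q1")
    case True
    then obtain k where k: "k < length q1" "q1 ! k = a" by (auto simp: in_set_conv_nth)
    have "d x0 a \<le> k" using d_sub_to[OF q1(1) q1(2) k(1)] k by simp
    also have "k \<le> d x0 z" using k q1 by simp
    finally have "real (d x0 a) \<le> rho" using z unfolding B1_def ball_iff by simp
    then show ?thesis using Adist[OF a(1)] rho_small by simp
  next
    case False
    then have "a \<in> set (tl q2)" using a by simp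
    then have "a \<in> set q2" by (cases q2) auto
    then obtain k where k: "k < length q2" "q2 ! k = a" by (auto simp: in_set_conv_nth)
    have "d z a \<le> k" using d_sub_to[OF q2(1) q2(2) k(1)] k by simp
    moreover have "d a y \<le> length q2 - 1 - k" using d_sub_from[OF q2(1) q2(3) k(1)] k by simp
    ultimately show ?thesis using a(1) q2(4) k(1) by (intro bexI[of _ a]) auto
  qed
qed

lemma psi_out:
  assumes z: "z \<in> B1" and y: "y \<in> G" "y \<notin> B"
  shows "psi z y \<le> 0"
proof -
  have zG: "z \<in> G" using z B1G by auto
  obtain a0 where a0: "a0 \<in> A" "d z a0 + d a0 y \<le> d z y" using hit_point[OF assms] by blast
  have a0G: "a0 \<in> G" using a0 AG by auto
  have g0: "gr a0 y z \<le> 0"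
    unfolding gr_def using a0 d_sym[OF y(1) a0G] d_sym[OF y(1) zG] by simp
  have "(\<Sum>a\<in>A. gr a y z) = gr a0 y z + (\<Sum>a\<in>A - {a0}. gr a y z)"
    using a0 finA by (simp add: sum.remove)
  also have "\<dots> \<le> 0 + (\<Sum>a\<in>A - {a0}. real (d z a))"
    using g0 AG by (intro add_mono sum_mono gr_le2[OF y(1) zG]) auto
  also have "\<dots> = (\<Sum>a\<in>A. real (d z a)) - real (d z a0)"
    using a0 finA by (simp add: sum_diff1)
  also have "\<dots> \<le> cz z"
    unfolding cz_def using Min_le[OF zG a0(1)] by simp
  finally have "(\<Sum>a\<in>A. gr a y z) \<le> cz z" .
  then have "(\<Sum>a\<in>A. (1 / real m) * gr a y z) \<le> cz z / real m"
    using mpos by (simp add: sum_divide_distrib[symmetric] divide_right_mono)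
  then show ?thesis unfolding psi_def by simp
qed

lemma gB_out: "y \<in> G \<Longrightarrow> y \<notin> B \<Longrightarrow> gB y \<le> 0"
  unfolding gB_def by (intro sum_nonpos mult_nonneg_nonpos psi_out) auto

definition "Cb = (\<Sum>z\<in>B1. real (gdeg G z) * ((\<Sum>a\<in>A. real (d z a)) / real m))"

lemma Cb_nonneg: "0 \<le> Cb"
  unfolding Cb_def by (intro sum_nonneg mult_nonneg_nonneg divide_nonneg_nonneg sum_nonneg) auto

lemma gB_le: "y \<in> G \<Longrightarrow> gB y \<le> Cb"
proof -
  assume y: "y \<in> G"
  have "psi z y \<le> (\<Sum>a\<in>A. real (d z a)) / real m" if z: "z \<in> B1" for z
  proof -
    have zG: "z \<in> G" using z B1G by auto
    have "(\<Sum>a\<in>A. gr a y z) \<le> (\<Sum>a\<in>A. real (d z a))"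
      using AG by (intro sum_mono gr_le2[OF y zG]) auto
    then have "(\<Sum>a\<in>A. (1 / real m) * gr a y z) \<le> (\<Sum>a\<in>A. real (d z a)) / real m"
      using mpos by (simp add: sum_divide_distrib[symmetric] divide_right_mono)
    moreover have "0 \<le> cz z / real m" using cz_nonneg[OF zG] mpos by simp
    ultimately show ?thesis unfolding psi_def by simp
  qed
  then show ?thesis unfolding gB_def Cb_def by (intro sum_mono mult_left_mono) auto
qed


lemma rho_ineq: "rho * (3 * real m + 1) \<le> r / 4"
proof -
  have "rho * (3 * real m + 1) \<le> rho * (4 * real m)"
    using rho_nonneg m1 by (intro mult_left_mono) auto
  also have "\<dots> = r / 8" unfolding rho_def using mpos by (simp add: field_simps)
  finally show ?thesis using r1 by simp
qed

lemma psi_lower: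
  assumes z: "z \<in> B1" and x: "x \<in> B1"
  shows "rho \<le> psi z x"
proof -
  have zG: "z \<in> G" using z B1G by auto
  have xG: "x \<in> G" using x B1G by auto
  have dz: "real (d x0 z) \<le> rho" using z unfolding B1_def ball_iff by simp
  have dx: "real (d x0 x) \<le> rho" using x unfolding B1_def ball_iff by simp
  have dxz: "real (d x z) \<le> 2 * rho"
    using d_tri[OF xG x0 zG] d_sym[OF xG x0] dz dx by simp
  have "Min ((\<lambda>a. d z a) ` A) \<in> (\<lambda>a. d z a) ` A" using finA Ane by (intro Min_in) auto
  then obtain a1 where a1: "a1 \<in> A" "Min ((\<lambda>a. d z a) ` A) = d z a1" by auto
  have a1G: "a1 \<in> G" using a1 AG by auto
  have "d x0 a1 \<le> d x0 z + d z a1" by (rule d_tri[OF x0 zG a1G])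
  then have mn: "r / 4 - rho \<le> real (Min ((\<lambda>a. d z a) ` A))"
    using Adist[OF a1(1)] dz a1(2) by simp
  have "(\<Sum>a\<in>A. real (d z a) - real (d x z)) \<le> (\<Sum>a\<in>A. gr a x z)"
    using AG by (intro sum_mono gr_ge[OF xG zG]) auto
  then have "(\<Sum>a\<in>A. real (d z a)) - real m * real (d x z) \<le> (\<Sum>a\<in>A. gr a x z)"
    using cardA by (simp add: sum_subtractf)
  then have "(\<Sum>a\<in>A. gr a x z) - cz z \<ge> real (Min ((\<lambda>a. d z a) ` A)) - real m * real (d x z)"
    unfolding cz_def by simp
  moreover have "real (Min ((\<lambda>a. d z a) ` A)) - real m * real (d x z) \<ge> r / 4 - rho - real m * (2 * rho)"
    using mn dxz mpos by (smt (verit) mult_left_mono of_nat_0_le_iff)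
  moreover have "r / 4 - rho - real m * (2 * rho) \<ge> real m * rho"
    using rho_ineq by (simp add: algebra_simps)
  ultimately have "real m * rho \<le> (\<Sum>a\<in>A. gr a x z) - cz z" by simp
  then have "rho \<le> ((\<Sum>a\<in>A. gr a x z) - cz z) / real m"
    using mpos by (simp add: field_simps)
  also have "\<dots> = psi z x"
    unfolding psi_def by (simp add: sum_divide_distrib[symmetric] diff_divide_distrib)
  finally show ?thesis .
qed

lemma gB_lower:
  assumes x: "x \<in> B1"
  shows "r * gvol G x0 rho / (32 * real m) \<le> gB x"
proof -
  have "r * gvol G x0 rho / (32 * real m) = gvol G x0 rho * rho"
    unfolding rho_def by simp
  also have "\<dots> = (\<Sum>z\<in>B1. real (gdeg G z) * rho)"
    unfolding gvol_def B1_def by (rule sum_distrib_right)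
  also have "\<dots> \<le> gB x"
    unfolding gB_def by (intro sum_mono mult_left_mono psi_lower[OF _ x]) auto
  finally show ?thesis .
qed

lemma partB:
  assumes x: "x \<in> B1"
  shows "ennreal (r * gvol G x0 rho / (32 * real m)) \<le> exp_exit n0 G B x"
proof -
  have xG: "x \<in> G" using x B1G by auto
  have nbB: "\<forall>y\<in>B. nbr_list n0 G y \<noteq> []" using BG nbr_ne by auto
  have "ennreal (gB x) \<le> exp_exit n0 G B x"
    by (rule lower_main[OF nbB gB_out gB_sub gB_le Cb_nonneg xG]) (use BG in auto)
  moreover have "ennreal (r * gvol G x0 rho / (32 * real m)) \<le> ennreal (gB x)"
    using gB_lower[OF x] by (rule ennreal_leI)
  ultimately show ?thesis by (rule order.trans[rotated])
qed

end


theorem lemma4p5: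
  fixes n0 :: nat and G :: "nat list set" and x0 :: "nat list" and r :: real
  assumes "n0 \<ge> 2"
    and "\<forall>v\<in>G. tree_vertex n0 v"
    and "infinite G"
    and "connected_sub G"
    and "x0 \<in> G"
    and "r \<ge> 1"
  shows "(\<forall>z\<in>gball G x0 r. exp_exit n0 G (gball G x0 r) z \<le> ennreal (2 * r * gvol G x0 r))
       \<and> (\<forall>m::nat. Msep G x0 r = enat m \<longrightarrow>
           (\<forall>x\<in>gball G x0 (r / (32 * real m)).
              ennreal (r * gvol G x0 (r / (32 * real m)) / (32 * real m))
                \<le> exp_exit n0 G (gball G x0 r) x))"
proof -
  interpret tg n0 G using assms(2,3,4) by unfold_locales
  have A: "\<forall>z\<in>gball G x0 r. exp_exit n0 G (gball G x0 r) z \<le> ennreal (2 * r * gvol G x0 r)"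
    using partA[OF assms(5) assms(6)] by blast
  have B: "\<forall>x\<in>gball G x0 (r / (32 * real m)).
              ennreal (r * gvol G x0 (r / (32 * real m)) / (32 * real m))
                \<le> exp_exit n0 G (gball G x0 r) x" if M: "Msep G x0 r = enat m" for m
  proof (cases "m = 0")
    case True
    then show ?thesis by simp
  next
    case False
    let ?S = "{enat (card A) | A. finite A \<and> A \<subseteq> G \<and>
      (\<forall>z\<in>A. r / 4 \<le> real (gdist G x0 z) \<and> real (gdist G x0 z) \<le> 3 * r / 4) \<and>
      (\<forall>p. gwalk G p \<and> hd p = x0 \<and> last p \<notin> gball G x0 r \<longrightarrow> set p \<inter> A \<noteq> {})}"
    have MS: "Msep G x0 r = Inf ?S" unfolding Msep_def ..
    have Sne: "?S \<noteq> {}"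
    proof
      assume "?S = {}"
      then have "Msep G x0 r = \<infinity>" using MS by (simp add: Inf_enat_def)
      then show False using M by simp
    qed
    obtain s0 where s0: "s0 \<in> ?S" using Sne by blast
    have "(LEAST x. x \<in> ?S) \<in> ?S" by (rule LeastI[of "\<lambda>x. x \<in> ?S", OF s0])
    then have "Inf ?S \<in> ?S" using Sne by (simp only: Inf_enat_def if_False)
    then obtain A where Aa: "enat (card A) = enat m" "finite A" "A \<subseteq> G"
      "\<forall>z\<in>A. r / 4 \<le> real (gdist G x0 z) \<and> real (gdist G x0 z) \<le> 3 * r / 4"
      "\<forall>p. gwalk G p \<and> hd p = x0 \<and> last p \<notin> gball G x0 r \<longrightarrow> set p \<inter> A \<noteq> {}"
      using MS M by auto
    interpret sepl n0 G x0 r A m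
      using assms Aa False by unfold_locales auto
    show ?thesis using partB unfolding B1_def B_def rho_def by blast
  qed
  show ?thesis using A B by blast
qed


end
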